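(* Let $\mathcal{P} \subseteq \mathbb{C}^{n_p}$ be closed under conjugation ($\overline{\mathsf{p}} \in \mathcal{P}$ for all $\mathsf{p} \in \mathcal{P}$), and let $\mu$ be a measure on $\mathcal{P}$ closed under conjugation (for every measurable $S$, $\overline{S}$ is measurable and $\mu(\overline{S}) = \mu(S)$). Let $y\colon \mathcal{P} \to \mathbb{C}^{n_o \times n_i}$ be measurable, closed under conjugation ($\overline{y(\mathsf{p})} = y(\overline{\mathsf{p}})$ for all $\mathsf{p}$), and square integrable, i.e. $\int_{\mathcal{P}} \|y(\mathsf{p})\|_F^2 \,d\mu(\mathsf{p}) < \infty$. Let $\hat{\alpha}_i, \hat{\beta}_j, \hat{\gamma}_k\colon \mathcal{P} \to \mathbb{C}$ ($i = 1,\dots,q_A$, $j = 1,\dots,q_B$, $k=1,\dots,q_C$) be measurable, closed under conjugation, and satisfy \[ \int_{\mathcal{P}} \left( \frac{\sum_{j=1}^{q_B} |\hat{\beta}_j(\mathsf{p})| \sum_{k=1}^{q_C} |\hat{\gamma}_k(\mathsf{p})|}{\sum_{i=1}^{q_A} |\hat{\alpha}_i(\mathsf{p})|} \right)^{2} d\mu(\mathsf{p}) < \infty . \] For real matrices $\hat{A}_i \in \mathbb{R}^{r \times r}$, $\hat{B}_j \in \mathbb{R}^{r \times n_i}$, $\hat{C}_k \in \mathbb{R}^{n_o \times r}$ put $\hat{\mathcal{A}}(\mathsf{p}) = \sum_{i} \hat{\alpha}_i(\mathsf{p}) \hat{A}_i$, $\hat{\mathcal{B}}(\mathsf{p}) =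 \sum_j \hat{\beta}_j(\mathsf{p}) \hat{B}_j$, $\hat{\mathcal{C}}(\mathsf{p}) = \sum_k \hat{\gamma}_k(\mathsf{p}) \hat{C}_k$, and, where $\hat{\mathcal{A}}(\mathsf{p})$ is invertible, define the reduced state $\hat{x}(\mathsf{p}) = \hat{\mathcal{A}}(\mathsf{p})^{-1} \hat{\mathcal{B}}(\mathsf{p}) \in \mathbb{C}^{r \times n_i}$, the reduced output $\hat{y}(\mathsf{p}) = \hat{\mathcal{C}}(\mathsf{p}) \hat{x}(\mathsf{p})$, and the reduced dual state $\hat{x}_d(\mathsf{p}) \in \mathbb{C}^{r \times n_o}$ by $\hat{\mathcal{A}}(\mathsf{p})^{*} \hat{x}_d(\mathsf{p}) = \hat{\mathcal{C}}(\mathsf{p})^{*}$. Suppose the matrices $\hat{A}_1, \dots, \hat{A}_{q_A}$ satisfy $\operatorname{ess\,sup}_{\mathsf{p} \in \mathcal{P}} \|\hat{\alpha}_i(\mathsf{p}) \hat{\mathcal{A}}(\mathsf{p})^{-1}\|_F < \infty$ for $i = 1, \dots, q_A$, and that $(\hat{A}_i, \hat{B}_j, \hat{C}_k)$ is $\mathcal{L}_2$-optimal, i.e. minimizes $\mathcal{J}(\hat{A}_i,\hat{B}_j,\hat{C}_k) = \int_{\mathcal{P}} \|y(\mathsf{p}) - \hat{y}(\mathsf{p})\|_F^2 \, d\mu(\mathsf{p})$. Then \begin{align*} \int_{\mathcal{P}} \hat{\gamma}_k(\overline{\mathsf{p}})\, y(\mathsf{p}) \hat{x}(\mathsf{p})^{*}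 \, d\mu(\mathsf{p}) &= \int_{\mathcal{P}} \hat{\gamma}_k(\overline{\mathsf{p}})\, \hat{y}(\mathsf{p}) \hat{x}(\mathsf{p})^{*} \, d\mu(\mathsf{p}), & k &= 1,\dots,q_C,\\ \int_{\mathcal{P}} \hat{\beta}_j(\overline{\mathsf{p}})\, \hat{x}_d(\mathsf{p}) y(\mathsf{p}) \, d\mu(\mathsf{p}) &= \int_{\mathcal{P}} \hat{\beta}_j(\overline{\mathsf{p}})\, \hat{x}_d(\mathsf{p}) \hat{y}(\mathsf{p}) \, d\mu(\mathsf{p}), & j &= 1,\dots,q_B,\\ \int_{\mathcal{P}} \hat{\alpha}_i(\overline{\mathsf{p}})\, \hat{x}_d(\mathsf{p}) y(\mathsf{p}) \hat{x}(\mathsf{p})^{*} \, d\mu(\mathsf{p}) &= \int_{\mathcal{P}} \hat{\alpha}_i(\overline{\mathsf{p}})\, \hat{x}_d(\mathsf{p}) \hat{y}(\mathsf{p}) \hat{x}(\mathsf{p})^{*} \, d\mu(\mathsf{p}), & i &= 1,\dots,q_A. \end{align*}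
   Context: $\|\cdot\|_F$ is the Frobenius norm and $(\cdot)^{*}$ the conjugate transpose. The minimization of $\mathcal{J}$ is over all real matrices $\hat{A}_i \in \mathbb{R}^{r\times r}$, $\hat{B}_j \in \mathbb{R}^{r \times n_i}$, $\hat{C}_k \in \mathbb{R}^{n_o \times r}$ with the scalar functions $\hat{\alpha}_i,\hat{\beta}_j,\hat{\gamma}_k$ and the reduced order $r$ fixed. *)

theory Defs
  imports "HOL-Analysis.Analysis" "HOL-Probability.Essential_Supremum"
begin

definition vconj :: "complex^'n \<Rightarrow> complex^'n" where
  "vconj p = (\<chi> i. cnj (p $ i))"

definition mconj :: "complex^'n^'m \<Rightarrow> complex^'n^'m" where
  "mconj M = (\<chi> a b. cnj (M $ a $ b))"

definition mstar :: "complex^'n^'m \<Rightarrow> complex^'m^'n" where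
  "mstar M = transpose (mconj M)"

definition fro_norm :: "complex^'n^'m \<Rightarrow> real" where
  "fro_norm M = sqrt (\<Sum>a\<in>UNIV. \<Sum>b\<in>UNIV. (cmod (M $ a $ b))\<^sup>2)"

definition cmat :: "real^'n^'m \<Rightarrow> complex^'n^'m" where
  "cmat A = (\<chi> a b. complex_of_real (A $ a $ b))"

definition cscale :: "complex \<Rightarrow> complex^'n^'m \<Rightarrow> complex^'n^'m" where
  "cscale c M = (\<chi> a b. c * M $ a $ b)"

text \<open>Affine parameter dependence \<open>\<Sum>_{i<q} f_i(p) M_i\<close> (indices \<open>0..q-1\<close>).\<close>
definition pmat :: "nat \<Rightarrow> (nat \<Rightarrow> 'p \<Rightarrow> complex) \<Rightarrow> (nat \<Rightarrow> real^'n^'m) \<Rightarrow> 'p \<Rightarrow> complex^'n^'m" where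
  "pmat q f M p = (\<Sum>i<q. cscale (f i p) (cmat (M i)))"

definition xhat :: "nat \<Rightarrow> (nat \<Rightarrow> 'p \<Rightarrow> complex) \<Rightarrow> (nat \<Rightarrow> real^'r^'r)
   \<Rightarrow> nat \<Rightarrow> (nat \<Rightarrow> 'p \<Rightarrow> complex) \<Rightarrow> (nat \<Rightarrow> real^'ni^'r) \<Rightarrow> 'p \<Rightarrow> complex^'ni^'r" where
  "xhat qA \<alpha> A qB \<beta> B p = matrix_inv (pmat qA \<alpha> A p) ** pmat qB \<beta> B p"

definition yhat :: "nat \<Rightarrow> (nat \<Rightarrow> 'p \<Rightarrow> complex) \<Rightarrow> (nat \<Rightarrow> real^'r^'r)
   \<Rightarrow> nat \<Rightarrow> (nat \<Rightarrow> 'p \<Rightarrow> complex) \<Rightarrow> (nat \<Rightarrow> real^'ni^'r)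
   \<Rightarrow> nat \<Rightarrow> (nat \<Rightarrow> 'p \<Rightarrow> complex) \<Rightarrow> (nat \<Rightarrow> real^'r^'no) \<Rightarrow> 'p \<Rightarrow> complex^'ni^'no" where
  "yhat qA \<alpha> A qB \<beta> B qC \<gamma> C p = pmat qC \<gamma> C p ** xhat qA \<alpha> A qB \<beta> B p"

definition xdual :: "nat \<Rightarrow> (nat \<Rightarrow> 'p \<Rightarrow> complex) \<Rightarrow> (nat \<Rightarrow> real^'r^'r)
   \<Rightarrow> nat \<Rightarrow> (nat \<Rightarrow> 'p \<Rightarrow> complex) \<Rightarrow> (nat \<Rightarrow> real^'r^'no) \<Rightarrow> 'p \<Rightarrow> complex^'no^'r" where
  "xdual qA \<alpha> A qC \<gamma> C p = matrix_inv (mstar (pmat qA \<alpha> A p)) ** mstar (pmat qC \<gamma> C p)"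

definition Jerr :: "'p measure \<Rightarrow> ('p \<Rightarrow> complex^'ni^'no)
   \<Rightarrow> nat \<Rightarrow> (nat \<Rightarrow> 'p \<Rightarrow> complex) \<Rightarrow> (nat \<Rightarrow> real^'r^'r)
   \<Rightarrow> nat \<Rightarrow> (nat \<Rightarrow> 'p \<Rightarrow> complex) \<Rightarrow> (nat \<Rightarrow> real^'ni^'r)
   \<Rightarrow> nat \<Rightarrow> (nat \<Rightarrow> 'p \<Rightarrow> complex) \<Rightarrow> (nat \<Rightarrow> real^'r^'no) \<Rightarrow> ennreal" where
  "Jerr \<mu> y qA \<alpha> A qB \<beta> B qC \<gamma> C =
     (\<integral>\<^sup>+ p. ennreal ((fro_norm (y p - yhat qA \<alpha> A qB \<beta> B qC \<gamma> C p))\<^sup>2) \<partial>\<mu>)"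

end

theory Submission
  imports Defs
begin

lemma fro_norm_eq: "fro_norm (M::complex^'n^'m) = norm M"
  unfolding fro_norm_def norm_vec_def L2_set_def
  by (simp add: sum_nonneg)

lemma norm_sq_mat: "(norm (M::complex^'n^'m))\<^sup>2 = (\<Sum>a\<in>UNIV. \<Sum>b\<in>UNIV. (cmod (M $ a $ b))\<^sup>2)"
  unfolding norm_vec_def L2_set_def
  by (simp add: sum_nonneg)

lemma norm_sq_vec: "(norm (v::complex^'n))\<^sup>2 = (\<Sum>b\<in>UNIV. (cmod (v $ b))\<^sup>2)"
  unfolding norm_vec_def L2_set_def
  by (simp add: sum_nonneg)

lemma cs_complex: "(cmod (\<Sum>b\<in>S. (x b::complex) * y b))\<^sup>2 \<le> (\<Sum>b\<in>S. (cmod (x b))\<^sup>2) * (\<Sum>b\<in>S. (cmod (y b))\<^sup>2)"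
proof -
  have "cmod (\<Sum>b\<in>S. x b * y b) \<le> (\<Sum>b\<in>S. cmod (x b) * cmod (y b))"
    by (rule order_trans[OF norm_sum]) (simp add: norm_mult)
  then have "(cmod (\<Sum>b\<in>S. x b * y b))\<^sup>2 \<le> (\<Sum>b\<in>S. cmod (x b) * cmod (y b))\<^sup>2"
    by (simp add: power_mono)
  also have "\<dots> \<le> (\<Sum>b\<in>S. (cmod (x b))\<^sup>2) * (\<Sum>b\<in>S. (cmod (y b))\<^sup>2)"
    by (rule Cauchy_Schwarz_ineq_sum)
  finally show ?thesis .
qed

lemma norm_mm: "norm ((A::complex^'n^'m) ** B) \<le> norm A * norm (B::complex^'p^'n)"
proof -
  have "(norm (A ** B))\<^sup>2 = (\<Sum>a\<in>UNIV. \<Sum>c\<in>UNIV. (cmod (\<Sum>b\<in>UNIV. A$a$b * B$b$c))\<^sup>2)"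
    by (simp add: norm_sq_mat matrix_matrix_mult_def)
  also have "\<dots> \<le> (\<Sum>a\<in>UNIV. \<Sum>c\<in>UNIV. (\<Sum>b\<in>UNIV. (cmod (A$a$b))\<^sup>2) * (\<Sum>b\<in>UNIV. (cmod (B$b$c))\<^sup>2))"
    by (intro sum_mono cs_complex)
  also have "\<dots> = (\<Sum>a\<in>UNIV. \<Sum>b\<in>UNIV. (cmod (A$a$b))\<^sup>2) * (\<Sum>c\<in>UNIV. \<Sum>b\<in>UNIV. (cmod (B$b$c))\<^sup>2)"
    by (simp add: sum_product)
  also have "\<dots> = (norm A)\<^sup>2 * (norm B)\<^sup>2"
  proof -
    have "(\<Sum>c\<in>UNIV. \<Sum>b\<in>UNIV. (cmod (B$b$c))\<^sup>2) = (\<Sum>b\<in>UNIV. \<Sum>c\<in>UNIV. (cmod (B$b$c))\<^sup>2)"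
      by (rule sum.swap)
    then show ?thesis by (simp add: norm_sq_mat)
  qed
  finally have "(norm (A ** B))\<^sup>2 \<le> (norm A * norm B)\<^sup>2" by (simp add: power_mult_distrib)
  then show ?thesis by (rule power2_le_imp_le) simp
qed

lemma norm_mv: "norm ((A::complex^'n^'m) *v v) \<le> norm A * norm v"
proof -
  have "(norm (A *v v))\<^sup>2 = (\<Sum>a\<in>UNIV. (cmod (\<Sum>b\<in>UNIV. A$a$b * v$b))\<^sup>2)"
    by (simp add: norm_sq_vec matrix_vector_mult_def)
  also have "\<dots> \<le> (\<Sum>a\<in>UNIV. (\<Sum>b\<in>UNIV. (cmod (A$a$b))\<^sup>2) * (\<Sum>b\<in>UNIV. (cmod (v$b))\<^sup>2))"
    by (intro sum_mono cs_complex)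
  also have "\<dots> = (norm A)\<^sup>2 * (norm v)\<^sup>2"
    by (simp add: norm_sq_mat norm_sq_vec sum_distrib_right)
  finally have "(norm (A *v v))\<^sup>2 \<le> (norm A * norm v)\<^sup>2" by (simp add: power_mult_distrib)
  then show ?thesis by (rule power2_le_imp_le) simp
qed

lemma cscale_nth[simp]: "cscale c M $ a $ b = c * M $ a $ b"
  by (simp add: cscale_def)
lemma cmat_nth[simp]: "cmat E $ a $ b = complex_of_real (E $ a $ b)"
  by (simp add: cmat_def)
lemma mconj_nth[simp]: "mconj M $ a $ b = cnj (M $ a $ b)"
  by (simp add: mconj_def)
lemma mstar_nth[simp]: "mstar M $ a $ b = cnj (M $ b $ a)"
  by (simp add: mstar_def transpose_def)
lemma vconj_nth[simp]: "vconj p $ a = cnj (p $ a)"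
  by (simp add: vconj_def)

lemma norm_cscale: "norm (cscale c M) = cmod c * norm (M::complex^'n^'m)"
proof -
  have "(norm (cscale c M))\<^sup>2 = (cmod c * norm M)\<^sup>2"
    by (simp add: norm_sq_mat power_mult_distrib norm_mult sum_distrib_left)
  then show ?thesis by (simp add: power2_eq_iff_nonneg)
qed

lemma norm_mstar: "norm (mstar M) = norm (M::complex^'n^'m)"
proof -
  have "(norm (mstar M))\<^sup>2 = (norm M)\<^sup>2"
    unfolding norm_sq_mat by (simp, rule sum.swap)
  then show ?thesis by (simp add: power2_eq_iff_nonneg)
qed

lemma cscale_mm_left: "cscale c A ** B = cscale c (A ** B)"
  by (simp add: vec_eq_iff matrix_matrix_mult_def sum_distrib_left mult.assoc)
lemma cscale_mm_right: "A ** cscale c B = cscale c (A ** B)"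
  by (simp add: vec_eq_iff matrix_matrix_mult_def sum_distrib_left mult_ac)
lemma cscale_cscale: "cscale c (cscale d M) = cscale (c * d) M"
  by (simp add: vec_eq_iff mult.assoc)
lemma cscale_add: "cscale c (A + B) = cscale c A + cscale c B"
  by (simp add: vec_eq_iff algebra_simps)
lemma cscale_diff: "cscale c (A - B) = cscale c A - cscale c B"
  by (simp add: vec_eq_iff algebra_simps)
lemma cscale_minus: "cscale c (- A) = - cscale c A"
  by (simp add: vec_eq_iff algebra_simps)
lemma cscale_add_left: "cscale (c + d) A = cscale c A + cscale d A"
  by (simp add: vec_eq_iff algebra_simps)
lemma cscale_real: "cscale (complex_of_real t) M = t *\<^sub>R M"
  by (simp add: vec_eq_iff) (simp add: scaleR_conv_of_real)
lemma cscale_one[simp]: "cscale 1 M = M"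
  by (simp add: vec_eq_iff)
lemma cscale_scaleR: "cscale c (t *\<^sub>R M) = t *\<^sub>R cscale c M"
  by (simp add: vec_eq_iff scaleR_conv_of_real mult_ac)

lemma mm_scaleR_left: "(t *\<^sub>R (A::complex^'n^'m)) ** B = t *\<^sub>R (A ** B)"
  by (simp add: scalar_matrix_assoc)
lemma mm_scaleR_right: "(A::complex^'n^'m) ** (t *\<^sub>R B) = t *\<^sub>R (A ** B)"
  by (simp add: matrix_scalar_ac scalar_matrix_assoc)
lemma mm_diff_left: "((A::complex^'n^'m) - B) ** C = A ** C - B ** C"
  by (simp add: vec_eq_iff matrix_matrix_mult_def algebra_simps sum_subtractf)
lemma mm_diff_right: "(A::complex^'n^'m) ** (B - C) = A ** B - A ** C"
  by (simp add: vec_eq_iff matrix_matrix_mult_def algebra_simps sum_subtractf)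
lemma mm_add_left: "((A::complex^'n^'m) + B) ** C = A ** C + B ** C"
  by (simp add: vec_eq_iff matrix_matrix_mult_def algebra_simps sum.distrib)
lemma mm_minus_left: "(- (A::complex^'n^'m)) ** C = - (A ** C)"
  by (simp add: vec_eq_iff matrix_matrix_mult_def sum_negf)
lemma mm_minus_right: "(A::complex^'n^'m) ** (- C) = - (A ** C)"
  by (simp add: vec_eq_iff matrix_matrix_mult_def sum_negf)

lemma mconj_mm: "mconj ((A::complex^'n^'m) ** B) = mconj A ** mconj B"
  by (simp add: vec_eq_iff matrix_matrix_mult_def)
lemma mstar_mm: "mstar ((A::complex^'n^'m) ** B) = mstar B ** mstar A"
  by (simp add: vec_eq_iff matrix_matrix_mult_def mult.commute)
lemma mstar_mstar[simp]: "mstar (mstar M) = M"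
  by (simp add: vec_eq_iff)
lemma mconj_mconj[simp]: "mconj (mconj M) = M"
  by (simp add: vec_eq_iff)
lemma mconj_mstar: "mconj (mstar M) = mstar (mconj M)"
  by (simp add: vec_eq_iff)
lemma mconj_diff: "mconj (A - B) = mconj A - mconj B"
  by (simp add: vec_eq_iff)
lemma mconj_cscale: "mconj (cscale c A) = cscale (cnj c) (mconj A)"
  by (simp add: vec_eq_iff)
lemma mconj_cmat[simp]: "mconj (cmat E) = cmat E"
  by (simp add: vec_eq_iff)
lemma mstar_mat1[simp]: "mstar (mat 1 :: complex^'n^'n) = mat 1"
  by (simp add: vec_eq_iff mat_def)
lemma mconj_mat1[simp]: "mconj (mat 1 :: complex^'n^'n) = mat 1"
  by (simp add: vec_eq_iff mat_def)
lemma mconj_sum: "finite S \<Longrightarrow> mconj (\<Sum>i\<in>S. f i) = (\<Sum>i\<in>S. mconj (f i))"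
  by (induction S rule: finite_induct) (auto simp: vec_eq_iff)

lemma mat1_ne0: "(mat 1 :: 'a::zero_neq_one^'n^'n) \<noteq> 0"
proof
  assume "(mat 1 :: 'a^'n^'n) = 0"
  then have "(mat 1 :: 'a^'n^'n) $ undefined $ undefined = 0" by simp
  then show False by (simp add: mat_def)
qed

lemma inv_props:
  assumes "invertible (A::'a::semiring_1^'n^'m)"
  shows "A ** matrix_inv A = mat 1" "matrix_inv A ** A = mat 1"
proof -
  have "\<exists>A'. A ** A' = mat 1 \<and> A' ** A = mat 1" using assms invertible_def by blast
  then have "A ** matrix_inv A = mat 1 \<and> matrix_inv A ** A = mat 1"
    unfolding matrix_inv_def by (rule someI_ex)
  then show "A ** matrix_inv A = mat 1" "matrix_inv A ** A = mat 1" by auto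
qed

lemma inv_unique:
  fixes A :: "'a::comm_ring_1^'n^'n"
  assumes "A ** B = mat 1" "B ** A = mat 1"
  shows "matrix_inv A = B"
proof -
  have inv: "invertible A" using assms invertible_def by blast
  have "matrix_inv A = matrix_inv A ** (A ** B)" using assms by simp
  also have "\<dots> = B" by (simp add: matrix_mul_assoc inv_props[OF inv])
  finally show ?thesis .
qed

lemma mstar_inv:
  fixes A :: "complex^'n^'n"
  assumes "invertible A"
  shows "invertible (mstar A)" "matrix_inv (mstar A) = mstar (matrix_inv A)"
proof -
  have 1: "mstar A ** mstar (matrix_inv A) = mat 1"
    by (metis assms inv_props(2) mstar_mat1 mstar_mm)
  have 2: "mstar (matrix_inv A) ** mstar A = mat 1"
    by (metis assms inv_props(1) mstar_mat1 mstar_mm)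
  show "invertible (mstar A)" using 1 2 invertible_def by blast
  show "matrix_inv (mstar A) = mstar (matrix_inv A)" using 1 2 by (rule inv_unique)
qed

lemma mconj_inv:
  fixes A :: "complex^'n^'n"
  assumes "invertible A"
  shows "invertible (mconj A)" "matrix_inv (mconj A) = mconj (matrix_inv A)"
proof -
  have 1: "mconj A ** mconj (matrix_inv A) = mconj (mat 1)"
    by (metis assms inv_props(1) mconj_mm)
  have 2: "mconj (matrix_inv A) ** mconj A = mconj (mat 1)"
    by (metis assms inv_props(2) mconj_mm)
  show "invertible (mconj A)" using 1 2 invertible_def by auto
  show "matrix_inv (mconj A) = mconj (matrix_inv A)" using 1 2 by (intro inv_unique) auto
qed

lemma invertible_mm:
  fixes A B :: "complex^'n^'n"
  assumes "invertible A" "invertible B"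
  shows "invertible (A ** B)"
proof -
  have "(A ** B) ** (matrix_inv B ** matrix_inv A) = mat 1"
    by (metis assms inv_props(1) matrix_mul_assoc matrix_mul_rid)
  moreover have "(matrix_inv B ** matrix_inv A) ** (A ** B) = mat 1"
    by (metis assms inv_props(2) matrix_mul_assoc matrix_mul_rid)
  ultimately show ?thesis using invertible_def by blast
qed

lemma invertible_I_plus:
  fixes X :: "complex^'n^'n"
  assumes "norm X < 1"
  shows "invertible (mat 1 + X)"
proof -
  have lin: "Vector_Spaces.linear (*s) (*s) ((*v) (mat 1 + X))"
    by (rule matrix_vector_mul_linear_gen)
  have "inj ((*v) (mat 1 + X))"
  proof (rule injI)
    fix v w :: "complex^'n"
    assume "(mat 1 + X) *v v = (mat 1 + X) *v w"
    then have "(mat 1 + X) *v (v - w) = 0"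
      by (simp add: matrix_vector_mult_diff_distrib)
    then have e: "v - w = - (X *v (v - w))"
      by (simp add: matrix_vector_mult_add_rdistrib eq_neg_iff_add_eq_0 add.commute)
    have "norm (v - w) \<le> norm X * norm (v - w)"
      by (metis e norm_minus_cancel norm_mv)
    then have "norm (v - w) = 0"
      using assms by (metis mult_le_cancel_right1 norm_ge_zero not_le order_antisym)
    then show "v = w" by simp
  qed
  then have "det (mat 1 + X) \<noteq> 0"
    using det_nz_iff_inj_gen[OF lin] by simp
  then show ?thesis by (simp add: invertible_det_nz)
qed

lemma column_mm: "(A::'a::comm_semiring_1^'n^'m) *v column j B = column j (A ** B)"
  by (simp add: vec_eq_iff matrix_vector_mult_def matrix_matrix_mult_def column_def)

lemma column_nth: "column j M $ i = M $ i $ j"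
  by (simp add: column_def)

lemma inv_cramer:
  fixes A :: "complex^'n^'n"
  assumes "invertible A"
  shows "matrix_inv A $ k $ j = det (\<chi> i l. if l = k then (mat 1 :: complex^'n^'n) $ i $ j else A $ i $ l) / det A"
proof -
  have d: "det A \<noteq> 0" using assms invertible_det_nz by blast
  have "A *v column j (matrix_inv A) = column j (mat 1)"
    by (simp add: column_mm inv_props[OF assms])
  then have "column j (matrix_inv A) = (\<chi> k. det (\<chi> i l. if l = k then column j (mat 1 :: complex^'n^'n) $ i else A $ i $ l) / det A)"
    using cramer[OF d] by blast
  then have "column j (matrix_inv A) $ k = det (\<chi> i l. if l = k then column j (mat 1 :: complex^'n^'n) $ i else A $ i $ l) / det A"
    by simp
  then show ?thesis by (simp only: column_nth)
qed

lemma inv_noninv: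
  fixes A :: "'a::semiring_1^'n^'m"
  assumes "\<not> invertible A" "\<not> invertible B"
  shows "matrix_inv A = matrix_inv B"
proof -
  have "(\<lambda>A'. A ** A' = mat 1 \<and> A' ** A = mat 1) = (\<lambda>A'. B ** A' = mat 1 \<and> A' ** B = mat 1)"
    using assms unfolding invertible_def by auto
  then show ?thesis unfolding matrix_inv_def by simp
qed

lemma meas_vec:
  fixes f :: "'x \<Rightarrow> 'a::euclidean_space^'n"
  assumes "\<And>i. (\<lambda>x. f x $ i) \<in> borel_measurable M"
  shows "f \<in> borel_measurable M"
  unfolding borel_measurable_euclidean_space[where f=f]
proof
  fix b :: "'a^'n" assume "b \<in> Basis"
  then obtain i u where b: "b = axis i u" "u \<in> Basis" unfolding Basis_vec_def by auto
  have "(\<lambda>x. f x $ i \<bullet> u) \<in> borel_measurable M"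
    using assms[of i] by (intro borel_measurable_inner) auto
  then show "(\<lambda>x. f x \<bullet> b) \<in> borel_measurable M" by (simp add: b inner_axis)
qed

lemma meas_mat:
  fixes f :: "'x \<Rightarrow> 'a::euclidean_space^'n^'m"
  assumes "\<And>a b. (\<lambda>x. f x $ a $ b) \<in> borel_measurable M"
  shows "f \<in> borel_measurable M"
  by (intro meas_vec assms)

lemma meas_nth1:
  fixes f :: "'x \<Rightarrow> 'a::real_normed_vector^'n"
  assumes "f \<in> borel_measurable M"
  shows "(\<lambda>x. f x $ a) \<in> borel_measurable M"
  using borel_measurable_continuous_on[OF continuous_on_component[OF continuous_on_id] assms] .

lemma meas_nth:
  fixes f :: "'x \<Rightarrow> 'a::real_normed_vector^'n^'m"
  assumes "f \<in> borel_measurable M"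
  shows "(\<lambda>x. f x $ a $ b) \<in> borel_measurable M"
  by (intro meas_nth1 assms)

lemma meas_mm:
  fixes f :: "'x \<Rightarrow> complex^'n^'m" and g :: "'x \<Rightarrow> complex^'p^'n"
  assumes "f \<in> borel_measurable M" "g \<in> borel_measurable M"
  shows "(\<lambda>x. f x ** g x) \<in> borel_measurable M"
  unfolding matrix_matrix_mult_def
  by (intro meas_mat) (simp, intro borel_measurable_sum borel_measurable_times meas_nth assms)

lemma meas_cscale:
  fixes f :: "'x \<Rightarrow> complex^'n^'m"
  assumes "c \<in> borel_measurable M" "f \<in> borel_measurable M"
  shows "(\<lambda>x. cscale (c x) (f x)) \<in> borel_measurable M"
  by (intro meas_mat) (simp, intro borel_measurable_times meas_nth assms)

lemma meas_cnj:
  assumes "(f::'x \<Rightarrow> complex) \<in> borel_measurable M"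
  shows "(\<lambda>x. cnj (f x)) \<in> borel_measurable M"
  using borel_measurable_continuous_on[OF continuous_on_cnj[OF continuous_on_id] assms] .

lemma meas_mstar:
  fixes f :: "'x \<Rightarrow> complex^'n^'m"
  assumes "f \<in> borel_measurable M"
  shows "(\<lambda>x. mstar (f x)) \<in> borel_measurable M"
  by (intro meas_mat) (simp, intro meas_cnj meas_nth assms)

lemma meas_pmat:
  assumes "\<forall>i<q. f i \<in> borel_measurable M"
  shows "(\<lambda>x. pmat q f N x) \<in> borel_measurable M"
  unfolding pmat_def
  by (intro borel_measurable_sum meas_cscale) (auto simp: assms)

lemma meas_det:
  fixes f :: "'x \<Rightarrow> complex^'n^'n"
  assumes "f \<in> borel_measurable M"
  shows "(\<lambda>x. det (f x)) \<in> borel_measurable M"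
  unfolding det_def
  by (intro borel_measurable_sum borel_measurable_times borel_measurable_const borel_measurable_prod meas_nth assms)

lemma not_inv0: "\<not> invertible (0::complex^'n^'n)"
  using mat1_ne0 unfolding invertible_def by (metis times0_left)

lemma meas_inv:
  fixes f :: "'x \<Rightarrow> complex^'n^'n"
  assumes f: "f \<in> borel_measurable M"
  shows "(\<lambda>x. matrix_inv (f x)) \<in> borel_measurable M"
proof (intro meas_mat)
  fix k j
  have eq: "matrix_inv (f x) $ k $ j = (if det (f x) = 0 then matrix_inv (0::complex^'n^'n) $ k $ j
          else det (\<chi> i l. if l = k then (mat 1 :: complex^'n^'n) $ i $ j else f x $ i $ l) / det (f x))" for x
  proof (cases "det (f x) = 0")
    case True
    then have "\<not> invertible (f x)" by (simp add: invertible_det_nz)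
    then show ?thesis using True inv_noninv[OF _ not_inv0, of "f x"] by simp
  next
    case False
    then show ?thesis using inv_cramer[of "f x" k j] by (simp add: invertible_det_nz)
  qed
  have m1: "(\<lambda>x. det (\<chi> i l. if l = k then (mat 1 :: complex^'n^'n) $ i $ j else f x $ i $ l)) \<in> borel_measurable M"
  proof (intro meas_det meas_mat)
    fix a b
    show "(\<lambda>x. (\<chi> i l. if l = k then (mat 1 :: complex^'n^'n) $ i $ j else f x $ i $ l) $ a $ b) \<in> borel_measurable M"
      by (cases "b = k") (simp_all add: meas_nth f)
  qed
  show "(\<lambda>x. matrix_inv (f x) $ k $ j) \<in> borel_measurable M"
    unfolding eq
    using m1 meas_det[OF f] by measurable
qed

lemma real_first_order:
  fixes c \<kappa> d :: real
  assumes d: "d > 0" and k: "\<kappa> \<ge> 0"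
    and h: "\<And>t. 0 < \<bar>t\<bar> \<Longrightarrow> \<bar>t\<bar> < d \<Longrightarrow> 0 \<le> 2 * t * c + t\<^sup>2 * \<kappa>"
  shows "c = 0"
proof (rule ccontr)
  assume c: "c \<noteq> 0"
  define s where "s = min (d/2) (\<bar>c\<bar> / (\<kappa> + 1))"
  have s0: "s > 0" using d c k by (simp add: s_def)
  have sd: "s < d" using d by (simp add: s_def)
  have "s \<le> \<bar>c\<bar> / (\<kappa> + 1)" by (simp add: s_def)
  then have sc: "s * (\<kappa> + 1) \<le> \<bar>c\<bar>" using k by (simp add: pos_le_divide_eq)
  define t where "t = - sgn c * s"
  have at: "\<bar>t\<bar> = s" using c s0 by (simp add: t_def abs_mult)
  have A: "0 \<le> 2 * t * c + t\<^sup>2 * \<kappa>" using h at s0 sd by auto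
  have cs: "c * sgn c = \<bar>c\<bar>" by (cases "c > 0") (auto simp: sgn_if)
  have B: "2 * t * c = - 2 * s * \<bar>c\<bar>" using cs by (simp add: t_def mult_ac)
  have C: "t\<^sup>2 = s\<^sup>2" using at by (metis power2_abs)
  have "0 \<le> - 2 * s * \<bar>c\<bar> + s\<^sup>2 * \<kappa>" using A B C by simp
  moreover have "s\<^sup>2 * \<kappa> \<le> s * \<bar>c\<bar>"
  proof -
    have "s\<^sup>2 * \<kappa> \<le> s * (s * (\<kappa> + 1))" using s0 k by (simp add: power2_eq_square algebra_simps)
    also have "\<dots> \<le> s * \<bar>c\<bar>" using sc s0 by (simp add: mult_left_mono)
    finally show ?thesis .
  qed
  ultimately have "0 \<le> - s * \<bar>c\<bar>" by linarith
  moreover have "s * \<bar>c\<bar> > 0" using s0 c by simp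
  ultimately show False by linarith
qed

lemma pointwise_bound:
  fixes r D Q :: "'v::real_inner"
  assumes t: "\<bar>t\<bar> \<le> 1" and QG: "norm Q \<le> G"
  shows "(norm (r + t *\<^sub>R D + t\<^sup>2 *\<^sub>R Q))\<^sup>2 \<le> (norm r)\<^sup>2 + 2 * t * inner r D + t\<^sup>2 * ((norm r)\<^sup>2 + 2 * (norm D)\<^sup>2 + 3 * G\<^sup>2)"
proof -
  have G0: "G \<ge> 0" using QG norm_ge_zero order_trans by blast
  have t2: "t\<^sup>2 \<le> 1" using t by (simp add: abs_square_le_1)
  have e: "(norm (r + (t *\<^sub>R D + t\<^sup>2 *\<^sub>R Q)))\<^sup>2 = (norm r)\<^sup>2 + 2 * inner r (t *\<^sub>R D + t\<^sup>2 *\<^sub>R Q) + (norm (t *\<^sub>R D + t\<^sup>2 *\<^sub>R Q))\<^sup>2"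
    by (simp add: power2_norm_eq_inner inner_add inner_commute)
  have i: "inner r (t *\<^sub>R D + t\<^sup>2 *\<^sub>R Q) = t * inner r D + t\<^sup>2 * inner r Q"
    by (simp add: inner_add_right)
  have iq: "t\<^sup>2 * inner r Q \<le> t\<^sup>2 * (norm r * G)"
  proof -
    have "inner r Q \<le> norm r * norm Q" by (rule norm_cauchy_schwarz)
    also have "\<dots> \<le> norm r * G" using QG by (simp add: mult_left_mono)
    finally show ?thesis by (simp add: mult_left_mono)
  qed
  have rg: "2 * (norm r * G) \<le> (norm r)\<^sup>2 + G\<^sup>2"
    using sum_squares_bound[of "norm r" G] by (simp add: power2_eq_square)
  have n2: "(norm (t *\<^sub>R D + t\<^sup>2 *\<^sub>R Q))\<^sup>2 \<le> 2 * t\<^sup>2 * (norm D)\<^sup>2 + 2 * t\<^sup>2 * G\<^sup>2"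
  proof -
    have "norm (t *\<^sub>R D + t\<^sup>2 *\<^sub>R Q) \<le> \<bar>t\<bar> * norm D + t\<^sup>2 * G"
      using norm_triangle_ineq[of "t *\<^sub>R D" "t\<^sup>2 *\<^sub>R Q"] QG
      by (simp add: mult_left_mono order_trans)
    then have "(norm (t *\<^sub>R D + t\<^sup>2 *\<^sub>R Q))\<^sup>2 \<le> (\<bar>t\<bar> * norm D + t\<^sup>2 * G)\<^sup>2"
      by (simp add: power_mono)
    also have "\<dots> \<le> 2 * (\<bar>t\<bar> * norm D)\<^sup>2 + 2 * (t\<^sup>2 * G)\<^sup>2"
      using sum_squares_bound[of "\<bar>t\<bar> * norm D" "t\<^sup>2 * G"] by (simp add: power2_eq_square algebra_simps)
    also have "(t\<^sup>2 * G)\<^sup>2 \<le> t\<^sup>2 * G\<^sup>2"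
    proof -
      have "(t\<^sup>2 * G)\<^sup>2 = t\<^sup>2 * (t\<^sup>2 * G\<^sup>2)" by (simp add: power2_eq_square)
      also have "\<dots> \<le> t\<^sup>2 * G\<^sup>2" by (rule mult_left_le_one_le) (simp_all add: t2)
      finally show ?thesis .
    qed
    finally show ?thesis by (simp add: power_mult_distrib)
  qed
  have "(norm (r + t *\<^sub>R D + t\<^sup>2 *\<^sub>R Q))\<^sup>2 = (norm r)\<^sup>2 + 2 * (t * inner r D + t\<^sup>2 * inner r Q) + (norm (t *\<^sub>R D + t\<^sup>2 *\<^sub>R Q))\<^sup>2"
    using e i by (simp add: add.assoc)
  also have "\<dots> \<le> (norm r)\<^sup>2 + 2 * t * inner r D + t\<^sup>2 * ((norm r)\<^sup>2 + G\<^sup>2) + (2 * t\<^sup>2 * (norm D)\<^sup>2 + 2 * t\<^sup>2 * G\<^sup>2)"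
  proof -
    have "2 * (t\<^sup>2 * inner r Q) \<le> t\<^sup>2 * ((norm r)\<^sup>2 + G\<^sup>2)"
      using iq rg by (smt (verit, ccfv_SIG) mult_left_mono zero_le_power2 distrib_left)
    then show ?thesis using n2 by (simp add: algebra_simps)
  qed
  also have "\<dots> = (norm r)\<^sup>2 + 2 * t * inner r D + t\<^sup>2 * ((norm r)\<^sup>2 + 2 * (norm D)\<^sup>2 + 3 * G\<^sup>2)"
    by (simp add: algebra_simps)
  finally show ?thesis .
qed

lemma variation:
  fixes r D :: "'p \<Rightarrow> 'v::euclidean_space" and G :: "'p \<Rightarrow> real"
  assumes r: "r \<in> borel_measurable \<mu>" and D: "D \<in> borel_measurable \<mu>" and G: "G \<in> borel_measurable \<mu>"
    and ir: "integrable \<mu> (\<lambda>p. (norm (r p))\<^sup>2)" and iD: "integrable \<mu> (\<lambda>p. (norm (D p))\<^sup>2)"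
    and iG: "integrable \<mu> (\<lambda>p. (G p)\<^sup>2)"
    and d: "\<delta> > 0"
    and opt: "\<And>t. 0 < \<bar>t\<bar> \<Longrightarrow> \<bar>t\<bar> < \<delta> \<Longrightarrow> \<exists>Q. (AE p in \<mu>. norm (Q p) \<le> G p) \<and>
       (\<integral>\<^sup>+p. ennreal ((norm (r p))\<^sup>2) \<partial>\<mu>) \<le> (\<integral>\<^sup>+p. ennreal ((norm (r p + t *\<^sub>R D p + t\<^sup>2 *\<^sub>R Q p))\<^sup>2) \<partial>\<mu>)"
  shows "(\<integral>p. inner (r p) (D p) \<partial>\<mu>) = 0"
proof -
  define K where "K p = (norm (r p))\<^sup>2 + 2 * (norm (D p))\<^sup>2 + 3 * (G p)\<^sup>2" for p
  have iK: "integrable \<mu> K" unfolding K_def using ir iD iG by auto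
  have iI: "integrable \<mu> (\<lambda>p. inner (r p) (D p))"
  proof (rule Bochner_Integration.integrable_bound)
    show "integrable \<mu> (\<lambda>p. (norm (r p))\<^sup>2 + (norm (D p))\<^sup>2)" using ir iD by auto
    show "(\<lambda>p. inner (r p) (D p)) \<in> borel_measurable \<mu>" using r D by (intro borel_measurable_inner)
    show "AE p in \<mu>. norm (inner (r p) (D p)) \<le> norm ((norm (r p))\<^sup>2 + (norm (D p))\<^sup>2)"
    proof (rule AE_I2)
      fix p
      have "\<bar>inner (r p) (D p)\<bar> \<le> norm (r p) * norm (D p)" by (rule Cauchy_Schwarz_ineq2)
      also have "\<dots> \<le> (norm (r p))\<^sup>2 + (norm (D p))\<^sup>2"
        using sum_squares_bound[of "norm (r p)" "norm (D p)"]
          mult_nonneg_nonneg[OF norm_ge_zero[of "r p"] norm_ge_zero[of "D p"]] unfolding power2_eq_square by linarith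
      finally show "norm (inner (r p) (D p)) \<le> norm ((norm (r p))\<^sup>2 + (norm (D p))\<^sup>2)" by simp
    qed
  qed
  define c where "c = (\<integral>p. inner (r p) (D p) \<partial>\<mu>)"
  define \<kappa> where "\<kappa> = integral\<^sup>L \<mu> K"
  have k0: "\<kappa> \<ge> 0" unfolding \<kappa>_def K_def by (intro integral_nonneg_AE) auto
  have "c = 0"
  proof (rule real_first_order[of "min \<delta> 1" \<kappa>])
    show "0 < min \<delta> 1" using d by simp
    show "0 \<le> \<kappa>" by (rule k0)
    fix t :: real assume t0: "0 < \<bar>t\<bar>" and td: "\<bar>t\<bar> < min \<delta> 1"
    obtain Q where QG: "AE p in \<mu>. norm (Q p) \<le> G p" and
      le: "(\<integral>\<^sup>+p. ennreal ((norm (r p))\<^sup>2) \<partial>\<mu>) \<le> (\<integral>\<^sup>+p. ennreal ((norm (r p + t *\<^sub>R D p + t\<^sup>2 *\<^sub>R Q p))\<^sup>2) \<partial>\<mu>)"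
      using opt[OF t0] td by auto
    define h where "h p = (norm (r p))\<^sup>2 + 2 * t * inner (r p) (D p) + t\<^sup>2 * K p" for p
    have hb: "AE p in \<mu>. (norm (r p + t *\<^sub>R D p + t\<^sup>2 *\<^sub>R Q p))\<^sup>2 \<le> h p"
      using QG
    proof (rule AE_mp, intro AE_I2 impI)
      fix p assume "norm (Q p) \<le> G p"
      then show "(norm (r p + t *\<^sub>R D p + t\<^sup>2 *\<^sub>R Q p))\<^sup>2 \<le> h p"
        unfolding h_def K_def using td by (intro pointwise_bound) auto
    qed
    have h0: "AE p in \<mu>. 0 \<le> h p"
      using hb by (rule AE_mp) (auto intro: order_trans[OF zero_le_power2])
    have ih: "integrable \<mu> h" unfolding h_def using ir iI iK by auto
    have "(\<integral>\<^sup>+p. ennreal ((norm (r p + t *\<^sub>R D p + t\<^sup>2 *\<^sub>R Q p))\<^sup>2) \<partial>\<mu>) \<le> (\<integral>\<^sup>+p. ennreal (h p) \<partial>\<mu>)"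
      using hb by (intro nn_integral_mono_AE) (auto elim: AE_mp intro: ennreal_leI)
    also have "\<dots> = ennreal (integral\<^sup>L \<mu> h)" by (rule nn_integral_eq_integral[OF ih h0])
    finally have le2: "(\<integral>\<^sup>+p. ennreal ((norm (r p))\<^sup>2) \<partial>\<mu>) \<le> ennreal (integral\<^sup>L \<mu> h)" using le by simp
    have "(\<integral>\<^sup>+p. ennreal ((norm (r p))\<^sup>2) \<partial>\<mu>) = ennreal (\<integral>p. (norm (r p))\<^sup>2 \<partial>\<mu>)"
      by (rule nn_integral_eq_integral[OF ir]) auto
    with le2 have X: "(\<integral>p. (norm (r p))\<^sup>2 \<partial>\<mu>) \<le> integral\<^sup>L \<mu> h \<or> ((\<integral>p. (norm (r p))\<^sup>2 \<partial>\<mu>) \<le> 0 \<and> integral\<^sup>L \<mu> h \<le> 0)"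
      by (auto simp add: ennreal_le_iff2)
    have hI0: "0 \<le> integral\<^sup>L \<mu> h" by (rule integral_nonneg_AE[OF h0])
    from X hI0 have "(\<integral>p. (norm (r p))\<^sup>2 \<partial>\<mu>) \<le> integral\<^sup>L \<mu> h" by linarith
    also have "integral\<^sup>L \<mu> h = (\<integral>p. (norm (r p))\<^sup>2 \<partial>\<mu>) + 2 * t * c + t\<^sup>2 * \<kappa>"
      unfolding h_def c_def \<kappa>_def using ir iI iK by simp
    finally show "0 \<le> 2 * t * c + t\<^sup>2 * \<kappa>" by simp
  qed
  then show ?thesis by (simp add: c_def)
qed

lemma vconj_vconj[simp]: "vconj (vconj p) = p"
  by (simp add: vec_eq_iff)

lemma conj_invariant:
  fixes \<mu> :: "(complex^'np) measure" and h :: "complex^'np \<Rightarrow> complex"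
  assumes P_conj: "\<forall>p\<in>P. vconj p \<in> P"
    and space_mu: "space \<mu> = P"
    and mu_conj: "\<forall>S\<in>sets \<mu>. vconj ` S \<in> sets \<mu> \<and> emeasure \<mu> (vconj ` S) = emeasure \<mu> S"
    and hm: "h \<in> borel_measurable \<mu>"
    and hc: "AE p in \<mu>. h (vconj p) = cnj (h p)"
  shows "cnj (integral\<^sup>L \<mu> h) = integral\<^sup>L \<mu> h"
proof -
  have pre: "vconj -` S \<inter> space \<mu> = vconj ` S" if "S \<in> sets \<mu>" for S
  proof -
    have S: "S \<subseteq> P" using sets.sets_into_space[OF that] space_mu by simp
    show ?thesis
    proof
      show "vconj -` S \<inter> space \<mu> \<subseteq> vconj ` S"
        by clarify (metis image_eqI vconj_vconj)
      show "vconj ` S \<subseteq> vconj -` S \<inter> space \<mu>"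
        using S P_conj space_mu by auto
    qed
  qed
  have vm: "vconj \<in> measurable \<mu> \<mu>"
  proof (rule measurableI)
    show "x \<in> space \<mu> \<Longrightarrow> vconj x \<in> space \<mu>" for x using P_conj space_mu by auto
    show "A \<in> sets \<mu> \<Longrightarrow> vconj -` A \<inter> space \<mu> \<in> sets \<mu>" for A using pre mu_conj by auto
  qed
  have d: "distr \<mu> \<mu> vconj = \<mu>"
  proof (rule measure_eqI)
    show "sets (distr \<mu> \<mu> vconj) = sets \<mu>" by simp
    fix A assume "A \<in> sets (distr \<mu> \<mu> vconj)"
    then have A: "A \<in> sets \<mu>" by simp
    show "emeasure (distr \<mu> \<mu> vconj) A = emeasure \<mu> A"
      using emeasure_distr[OF vm A] pre[OF A] mu_conj A by simp
  qed
  have "integral\<^sup>L \<mu> h = integral\<^sup>L (distr \<mu> \<mu> vconj) h" using d by simp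
  also have "\<dots> = (\<integral>p. h (vconj p) \<partial>\<mu>)" by (rule integral_distr[OF vm hm])
  also have "\<dots> = (\<integral>p. cnj (h p) \<partial>\<mu>)"
  proof (rule integral_cong_AE)
    show "(\<lambda>p. h (vconj p)) \<in> borel_measurable \<mu>" using measurable_comp[OF vm hm] by (simp add: comp_def)
    show "(\<lambda>p. cnj (h p)) \<in> borel_measurable \<mu>" using hm by (rule meas_cnj)
    show "AE p in \<mu>. h (vconj p) = cnj (h p)" by (rule hc)
  qed
  also have "\<dots> = cnj (integral\<^sup>L \<mu> h)" by simp
  finally show ?thesis by simp
qed

definition eunit :: "'a \<Rightarrow> 'b \<Rightarrow> real^'b^'a" where
  "eunit a c = (\<chi> i j. if i = a \<and> j = c then 1 else 0)"

lemma inner_complex_cnj: "inner (z::complex) w = Re (z * cnj w)"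
  by (simp add: inner_complex_def)

lemma inner_mat: "inner (R::complex^'n^'m) M = (\<Sum>x\<in>UNIV. \<Sum>y\<in>UNIV. Re (R$x$y * cnj (M$x$y)))"
  by (simp add: inner_vec_def inner_complex_cnj)

lemma cmat_eunit_nth[simp]: "cmat (eunit a c) $ s $ t = (if s = a \<and> t = c then 1 else 0)"
  by (simp add: cmat_def eunit_def)

lemma sum_delta_mult_l: "(\<Sum>k\<in>(UNIV::'k::finite set). (if k = c then A else 0) * f k) = A * (f c :: 'a::comm_ring_1)"
proof -
  have "(\<Sum>k\<in>(UNIV::'k set). (if k = c then A else 0) * f k) = (\<Sum>k\<in>UNIV. if k = c then A * f c else 0)"
    by (intro sum.cong) auto
  then show ?thesis by simp
qed

lemma sum_delta_mult_r: "(\<Sum>k\<in>(UNIV::'k::finite set). f k * (if k = c then 1 else 0)) = (f c :: 'a::comm_ring_1)"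
proof -
  have "(\<Sum>k\<in>(UNIV::'k set). f k * (if k = c then 1 else 0)) = (\<Sum>k\<in>UNIV. if k = c then f c else 0)"
    by (intro sum.cong) auto
  then show ?thesis by simp
qed

lemma unit_prod_nth1:
  "((U::complex^'s^'m) ** cmat (eunit a (c::'t::finite))) $ x $ t = (if t = c then U $ x $ a else 0)"
  by (cases "t = c") (simp_all add: matrix_matrix_mult_def sum_delta_mult_r del: cmat_nth)

lemma unit_prod_nth:
  "((U::complex^'s^'m) ** cmat (eunit a c) ** (V::complex^'n^'t)) $ x $ y = U $ x $ a * V $ c $ y"
  by (simp add: matrix_matrix_mult_def[of "U ** cmat (eunit a c)" V] unit_prod_nth1 sum_delta_mult_l)

lemma inner_unit:
  fixes R :: "complex^'n^'m" and U :: "complex^'s^'m" and V :: "complex^'n^'t"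
  shows "inner R (cscale g (U ** cmat (eunit a c) ** V)) = Re (cnj g * (mstar U ** R ** mstar V) $ a $ c)"
proof -
  have "inner R (cscale g (U ** cmat (eunit a c) ** V)) = (\<Sum>x\<in>UNIV. \<Sum>y\<in>UNIV. Re (R$x$y * cnj (g * (U $ x $ a * V $ c $ y))))"
    by (simp add: inner_mat unit_prod_nth)
  also have "\<dots> = Re (\<Sum>x\<in>UNIV. \<Sum>y\<in>UNIV. R$x$y * cnj (g * (U $ x $ a * V $ c $ y)))"
    by (simp add: Re_sum)
  also have "(\<Sum>x\<in>UNIV. \<Sum>y\<in>UNIV. R$x$y * cnj (g * (U $ x $ a * V $ c $ y))) = cnj g * (mstar U ** R ** mstar V) $ a $ c"
  proof -
    have "cnj g * (mstar U ** R ** mstar V) $ a $ c = cnj g * (\<Sum>y\<in>UNIV. (\<Sum>x\<in>UNIV. cnj (U$x$a) * R$x$y) * cnj (V$c$y))"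
      by (simp add: matrix_matrix_mult_def)
    also have "\<dots> = (\<Sum>y\<in>UNIV. \<Sum>x\<in>UNIV. R$x$y * cnj (g * (U $ x $ a * V $ c $ y)))"
      by (simp add: sum_distrib_left sum_distrib_right mult_ac)
    also have "\<dots> = (\<Sum>x\<in>UNIV. \<Sum>y\<in>UNIV. R$x$y * cnj (g * (U $ x $ a * V $ c $ y)))"
      by (rule sum.swap)
    finally show ?thesis by simp
  qed
  finally show ?thesis .
qed

lemma norm_cmat_eunit: "norm (cmat (eunit a c)) = 1"
proof -
  have "(norm (cmat (eunit a c)))\<^sup>2 = (\<Sum>x\<in>UNIV. \<Sum>y\<in>UNIV. (if x = a \<and> y = c then 1 else 0))"
    unfolding norm_sq_mat by (intro sum.cong refl) (simp add: eunit_def)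
  also have "\<dots> = (\<Sum>x\<in>UNIV. if x = a then 1 else 0)"
  proof (intro sum.cong refl)
    fix x show "(\<Sum>y\<in>UNIV. (if x = a \<and> y = c then 1 else 0)) = (if x = a then (1::real) else 0)"
      by (cases "x = a") simp_all
  qed
  also have "\<dots> = 1" by simp
  finally have "(norm (cmat (eunit a c)))\<^sup>2 = 1" .
  then show ?thesis using norm_ge_zero[of "cmat (eunit a c)"] by (auto simp: power2_eq_1_iff)
qed

lemma cmat_add: "cmat (X + Y) = cmat X + cmat Y"
  by (simp add: vec_eq_iff cmat_def)
lemma cmat_scaleR: "cmat (t *\<^sub>R X) = t *\<^sub>R cmat X"
  by (simp add: vec_eq_iff cmat_def) (simp add: scaleR_conv_of_real)

lemma pmat_upd:
  assumes "k < q"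
  shows "pmat q f (M(k := M k + t *\<^sub>R E)) p = pmat q f M p + t *\<^sub>R cscale (f k p) (cmat E)"
proof -
  have "pmat q f (M(k := M k + t *\<^sub>R E)) p =
        (\<Sum>i<q. cscale (f i p) (cmat (M i)) + (if i = k then t *\<^sub>R cscale (f k p) (cmat E) else 0))"
    unfolding pmat_def
    by (intro sum.cong refl) (auto simp: cmat_add cmat_scaleR cscale_add cscale_scaleR)
  also have "\<dots> = pmat q f M p + t *\<^sub>R cscale (f k p) (cmat E)"
    using assms by (simp add: sum.distrib pmat_def sum.delta)
  finally show ?thesis .
qed

lemma pmat_conj:
  assumes "\<forall>i<q. f i (vconj p) = cnj (f i p)"
  shows "pmat q f M (vconj p) = mconj (pmat q f M p)"
  unfolding pmat_def using assms by (simp add: mconj_sum mconj_cscale)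

lemma norm_pmat: "norm (pmat q f M p) \<le> (\<Sum>i<q. norm (cmat (M i))) * (\<Sum>i<q. cmod (f i p))"
proof -
  have "norm (pmat q f M p) \<le> (\<Sum>i<q. cmod (f i p) * norm (cmat (M i)))"
    unfolding pmat_def by (rule order_trans[OF norm_sum]) (simp add: norm_cscale)
  also have "\<dots> \<le> (\<Sum>i<q. (\<Sum>i<q. norm (cmat (M i))) * cmod (f i p))"
  proof (intro sum_mono)
    fix i assume "i \<in> {..<q}"
    then have "norm (cmat (M i)) \<le> (\<Sum>i<q. norm (cmat (M i)))"
      by (intro member_le_sum) auto
    then show "cmod (f i p) * norm (cmat (M i)) \<le> (\<Sum>i<q. norm (cmat (M i))) * cmod (f i p)"
      by (simp add: mult.commute mult_left_mono)
  qed
  also have "\<dots> = (\<Sum>i<q. norm (cmat (M i))) * (\<Sum>i<q. cmod (f i p))"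
    by (simp add: sum_distrib_left)
  finally show ?thesis .
qed

lemma vconj_meas:
  fixes \<mu> :: "(complex^'np) measure"
  assumes P_conj: "\<forall>p\<in>P. vconj p \<in> P"
    and space_mu: "space \<mu> = P"
    and mu_conj: "\<forall>S\<in>sets \<mu>. vconj ` S \<in> sets \<mu> \<and> emeasure \<mu> (vconj ` S) = emeasure \<mu> S"
  shows "vconj \<in> measurable \<mu> \<mu>"
proof (rule measurableI)
  show "x \<in> space \<mu> \<Longrightarrow> vconj x \<in> space \<mu>" for x using P_conj space_mu by auto
  fix S assume S0: "S \<in> sets \<mu>"
  have S: "S \<subseteq> P" using sets.sets_into_space[OF S0] space_mu by simp
  have "vconj -` S \<inter> space \<mu> = vconj ` S"
  proof
    show "vconj -` S \<inter> space \<mu> \<subseteq> vconj ` S"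
      by clarify (metis image_eqI vconj_vconj)
    show "vconj ` S \<subseteq> vconj -` S \<inter> space \<mu>"
      using S P_conj space_mu by auto
  qed
  then show "vconj -` S \<inter> space \<mu> \<in> sets \<mu>" using mu_conj S0 by auto
qed

lemma case_lemma:
  fixes \<mu> :: "(complex^'np) measure"
    and r :: "complex^'np \<Rightarrow> complex^'n^'m" and U :: "complex^'np \<Rightarrow> complex^'s^'m"
    and V :: "complex^'np \<Rightarrow> complex^'n^'t" and g :: "complex^'np \<Rightarrow> complex"
    and F1 F2 :: "complex^'np \<Rightarrow> complex^'t^'s"
  assumes P_conj: "\<forall>p\<in>P. vconj p \<in> P"
    and space_mu: "space \<mu> = P"
    and mu_conj: "\<forall>S\<in>sets \<mu>. vconj ` S \<in> sets \<mu> \<and> emeasure \<mu> (vconj ` S) = emeasure \<mu> S"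
    and Wm: "(\<lambda>p. cscale (cnj (g p)) (mstar (U p) ** r p ** mstar (V p))) \<in> borel_measurable \<mu>"
    and F1: "integrable \<mu> F1" and F2: "integrable \<mu> F2"
    and FW: "AE p in \<mu>. F1 p - F2 p = cscale (cnj (g p)) (mstar (U p) ** r p ** mstar (V p))"
    and Wc: "AE p in \<mu>. cscale (cnj (g (vconj p))) (mstar (U (vconj p)) ** r (vconj p) ** mstar (V (vconj p)))
                       = mconj (cscale (cnj (g p)) (mstar (U p) ** r p ** mstar (V p)))"
    and var: "\<And>a c. (\<integral>p. inner (r p) (cscale (g p) (U p ** cmat (eunit a c) ** V p)) \<partial>\<mu>) = 0"
  shows "integral\<^sup>L \<mu> F1 = integral\<^sup>L \<mu> F2"
proof -
  define W where "W = (\<lambda>p. cscale (cnj (g p)) (mstar (U p) ** r p ** mstar (V p)))"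
  have iW: "integrable \<mu> W"
  proof -
    have "integrable \<mu> (\<lambda>p. F1 p - F2 p)" using F1 F2 by auto
    then show ?thesis
      by (rule integrable_cong_AE_imp) (use Wm FW in \<open>auto simp: W_def\<close>)
  qed
  have "integral\<^sup>L \<mu> F1 - integral\<^sup>L \<mu> F2 = integral\<^sup>L \<mu> (\<lambda>p. F1 p - F2 p)"
    using F1 F2 by simp
  also have "\<dots> = integral\<^sup>L \<mu> W"
    by (rule integral_cong_AE) (use F1 F2 Wm FW in \<open>auto simp: W_def\<close>)
  also have "integral\<^sup>L \<mu> W = 0"
  proof (subst vec_eq_iff, intro allI, subst vec_eq_iff, intro allI)
    fix a c
    have bl: "bounded_linear (\<lambda>M::complex^'t^'s. M $ a $ c)"
      by (rule bounded_linear_compose[OF bounded_linear_vec_nth bounded_linear_vec_nth])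
    define h where "h p = W p $ a $ c" for p
    have ih: "integrable \<mu> h" unfolding h_def using bl iW by (rule integrable_bounded_linear)
    have eqh: "integral\<^sup>L \<mu> W $ a $ c = integral\<^sup>L \<mu> h"
      unfolding h_def using integral_bounded_linear[OF bl iW] by simp
    have hm: "h \<in> borel_measurable \<mu>" using ih by auto
    have "cnj (integral\<^sup>L \<mu> h) = integral\<^sup>L \<mu> h"
    proof (rule conj_invariant[OF P_conj space_mu mu_conj hm])
      show "AE p in \<mu>. h (vconj p) = cnj (h p)"
        using Wc by (rule AE_mp) (auto simp: h_def W_def)
    qed
    then have im: "Im (integral\<^sup>L \<mu> h) = 0" by (metis complex_cnj_cancel_iff complex_cnj_zero_iff
        cnj.sel(2) add.inverse_neutral equation_minus_iff neg_equal_zero)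
    have "Re (integral\<^sup>L \<mu> h) = (\<integral>p. Re (h p) \<partial>\<mu>)"
      using integral_bounded_linear[OF bounded_linear_Re ih] by simp
    also have "\<dots> = (\<integral>p. inner (r p) (cscale (g p) (U p ** cmat (eunit a c) ** V p)) \<partial>\<mu>)"
      by (intro Bochner_Integration.integral_cong refl) (simp add: inner_unit h_def W_def)
    also have "\<dots> = 0" by (rule var)
    finally have re: "Re (integral\<^sup>L \<mu> h) = 0" .
    have "integral\<^sup>L \<mu> h = 0" using re im by (simp add: complex_eq_iff)
    then show "integral\<^sup>L \<mu> W $ a $ c = 0 $ a $ c" using eqh by simp
  qed
  finally show ?thesis by simp
qed

lemma pert_A:
  fixes Am E :: "complex^'r^'r"
  assumes inv: "invertible Am" and N: "norm (cscale a (matrix_inv Am)) \<le> M"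
    and E: "norm E \<le> 1" and t: "\<bar>t\<bar> * M \<le> 1/2"
  defines "F \<equiv> cscale a E"
  defines "Ai \<equiv> matrix_inv Am"
  defines "Ai' \<equiv> matrix_inv (Am + t *\<^sub>R F)"
  shows "invertible (Am + t *\<^sub>R F)"
    and "Ai' = Ai - t *\<^sub>R (Ai ** F ** Ai) + t\<^sup>2 *\<^sub>R (Ai ** F ** Ai' ** F ** Ai)"
    and "norm (F ** Ai' ** F) \<le> 2 * M * cmod a"
proof -
  have M0: "M \<ge> 0" using N norm_ge_zero order_trans by blast
  have AAi: "Am ** Ai = mat 1" "Ai ** Am = mat 1" using inv_props[OF inv] by (simp_all add: Ai_def)
  define X where "X = t *\<^sub>R (cscale a Ai ** E)"
  have "norm X \<le> \<bar>t\<bar> * (norm (cscale a Ai) * norm E)"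
    unfolding X_def by (simp add: mult_left_mono norm_mm)
  also have "\<dots> \<le> \<bar>t\<bar> * (M * 1)"
    using N E M0 by (intro mult_left_mono mult_mono) (auto simp: Ai_def)
  also have "\<dots> < 1" using t by simp
  finally have X1: "norm X < 1" .
  have eq: "Am ** (mat 1 + X) = Am + t *\<^sub>R F"
    by (simp add: X_def F_def matrix_add_ldistrib mm_scaleR_right cscale_mm_left cscale_mm_right
        matrix_mul_assoc AAi)
  show invA': "invertible (Am + t *\<^sub>R F)"
    using invertible_mm[OF inv invertible_I_plus[OF X1]] eq by simp
  have A'1: "Ai' ** (Am + t *\<^sub>R F) = mat 1" "(Am + t *\<^sub>R F) ** Ai' = mat 1"
    using inv_props[OF invA'] by (simp_all add: Ai'_def)
  have i: "Ai' = Ai - t *\<^sub>R (Ai' ** F ** Ai)"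
  proof -
    have "Ai' ** Am = mat 1 - t *\<^sub>R (Ai' ** F)"
      using A'1(1) by (simp add: matrix_add_ldistrib mm_scaleR_right algebra_simps)
    then have "(Ai' ** Am) ** Ai = (mat 1 - t *\<^sub>R (Ai' ** F)) ** Ai" by simp
    then show ?thesis
      by (simp add: matrix_mul_assoc[symmetric] AAi mm_diff_left mm_scaleR_left)
  qed
  have ii: "Ai' = Ai - t *\<^sub>R (Ai ** F ** Ai')"
  proof -
    have "Am ** Ai' = mat 1 - t *\<^sub>R (F ** Ai')"
      using A'1(2) by (simp add: mm_add_left mm_scaleR_left algebra_simps)
    then have "Ai ** (Am ** Ai') = Ai ** (mat 1 - t *\<^sub>R (F ** Ai'))" by simp
    then show ?thesis
      by (simp add: matrix_mul_assoc AAi mm_diff_right mm_scaleR_right)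
  qed
  show "Ai' = Ai - t *\<^sub>R (Ai ** F ** Ai) + t\<^sup>2 *\<^sub>R (Ai ** F ** Ai' ** F ** Ai)"
  proof -
    have "Ai' ** F ** Ai = (Ai - t *\<^sub>R (Ai ** F ** Ai')) ** F ** Ai"
      using ii by simp
    also have "\<dots> = Ai ** F ** Ai - t *\<^sub>R (Ai ** F ** Ai' ** F ** Ai)"
      by (simp add: mm_diff_left mm_scaleR_left)
    finally have "Ai' ** F ** Ai = Ai ** F ** Ai - t *\<^sub>R (Ai ** F ** Ai' ** F ** Ai)" .
    then have "Ai' = Ai - t *\<^sub>R (Ai ** F ** Ai - t *\<^sub>R (Ai ** F ** Ai' ** F ** Ai))"
      using i by metis
    then show ?thesis
      by (simp add: scaleR_right_diff_distrib power2_eq_square diff_diff_eq2 diff_add_eq)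
  qed
  define Z where "Z = cscale a Ai'"
  have Zeq: "Z = cscale a Ai - t *\<^sub>R (Z ** E ** cscale a Ai)"
  proof -
    have "cscale a Ai' = cscale a Ai - t *\<^sub>R cscale a (Ai' ** F ** Ai)"
      using arg_cong[OF i, of "cscale a"] by (simp add: cscale_diff cscale_scaleR)
    also have "cscale a (Ai' ** F ** Ai) = Z ** E ** cscale a Ai"
      by (simp add: Z_def F_def cscale_mm_left cscale_mm_right)
    finally show ?thesis by (simp add: Z_def)
  qed
  have "norm Z \<le> norm (cscale a Ai) + norm (t *\<^sub>R (Z ** E ** cscale a Ai))"
    using Zeq norm_triangle_ineq4 by metis
  also have "norm (t *\<^sub>R (Z ** E ** cscale a Ai)) \<le> \<bar>t\<bar> * (norm Z * norm E * norm (cscale a Ai))"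
    by (simp add: mult_left_mono norm_mm order_trans[OF norm_mm] mult_right_mono)
  also have "\<dots> \<le> \<bar>t\<bar> * (norm Z * 1 * M)"
    using N E M0 by (intro mult_left_mono mult_mono) (auto simp: Ai_def)
  finally have "norm Z \<le> M + (\<bar>t\<bar> * M) * norm Z" using N by (simp add: Ai_def mult_ac)
  also have "(\<bar>t\<bar> * M) * norm Z \<le> 1/2 * norm Z" using t by (intro mult_right_mono) auto
  finally have Z2: "norm Z \<le> 2 * M" by simp
  have "F ** Ai' ** F = cscale a (E ** Z ** E)"
    by (simp add: F_def Z_def cscale_mm_left cscale_mm_right cscale_cscale mult.commute)
  then have n1: "norm (F ** Ai' ** F) = cmod a * norm (E ** Z ** E)" by (simp add: norm_cscale)
  have "norm (E ** Z ** E) \<le> norm E * norm Z * norm E"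
    by (meson norm_mm order_trans mult_right_mono norm_ge_zero)
  also have "\<dots> \<le> 1 * (2 * M) * 1"
    using E Z2 M0 by (intro mult_mono) auto
  finally have n2: "norm (E ** Z ** E) \<le> 2 * M" by simp
  show "norm (F ** Ai' ** F) \<le> 2 * M * cmod a"
    using n1 mult_left_mono[OF n2 norm_ge_zero[of a]] by (simp add: mult_ac)
qed

lemma L2_bound:
  fixes Z :: "'p \<Rightarrow> 'v::{banach, second_countable_topology}"
  assumes Zm: "Z \<in> borel_measurable \<mu>" and i\<rho>: "integrable \<mu> (\<lambda>p. (\<rho> p)\<^sup>2)"
    and b: "AE p in \<mu>. norm (Z p) \<le> K * \<rho> p"
  shows "integrable \<mu> (\<lambda>p. (norm (Z p))\<^sup>2)"
proof (rule Bochner_Integration.integrable_bound)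
  show "integrable \<mu> (\<lambda>p. K\<^sup>2 * (\<rho> p)\<^sup>2)" using i\<rho> by simp
  show "(\<lambda>p. (norm (Z p))\<^sup>2) \<in> borel_measurable \<mu>" using Zm by measurable
  show "AE p in \<mu>. norm ((norm (Z p))\<^sup>2) \<le> norm (K\<^sup>2 * (\<rho> p)\<^sup>2)"
    using b
  proof (rule AE_mp, intro AE_I2 impI)
    fix p assume h: "norm (Z p) \<le> K * \<rho> p"
    have "(norm (Z p))\<^sup>2 \<le> (K * \<rho> p)\<^sup>2" using h by (intro power_mono) auto
    then show "norm ((norm (Z p))\<^sup>2) \<le> norm (K\<^sup>2 * (\<rho> p)\<^sup>2)"
      by (simp add: power_mult_distrib)
  qed
qed

lemma prod_integrable:
  fixes F :: "'p \<Rightarrow> 'v::{banach, second_countable_topology}"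
  assumes Fm: "F \<in> borel_measurable \<mu>" and i\<rho>: "integrable \<mu> (\<lambda>p. (\<rho> p)\<^sup>2)"
    and iz: "integrable \<mu> (\<lambda>p. (norm (z p))\<^sup>2)" and K: "K \<ge> 0"
    and b: "AE p in \<mu>. norm (F p) \<le> K * \<rho> p * norm (z p)"
    and \<rho>0: "AE p in \<mu>. \<rho> p \<ge> 0"
  shows "integrable \<mu> F"
proof (rule Bochner_Integration.integrable_bound)
  show "integrable \<mu> (\<lambda>p. K * ((\<rho> p)\<^sup>2 + (norm (z p))\<^sup>2))" using i\<rho> iz by simp
  show "F \<in> borel_measurable \<mu>" by (rule Fm)
  show "AE p in \<mu>. norm (F p) \<le> norm (K * ((\<rho> p)\<^sup>2 + (norm (z p))\<^sup>2))"
    using b \<rho>0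
  proof (rule AE_mp[OF AE_conjI], intro AE_I2 impI)
    fix p assume h: "norm (F p) \<le> K * \<rho> p * norm (z p) \<and> \<rho> p \<ge> 0"
    have a: "\<rho> p * norm (z p) \<le> (\<rho> p)\<^sup>2 + (norm (z p))\<^sup>2"
    proof -
      have "0 \<le> \<rho> p * norm (z p)" using h by simp
      then show ?thesis using sum_squares_bound[of "\<rho> p" "norm (z p)"]
        unfolding power2_eq_square by linarith
    qed
    have "norm (F p) \<le> K * (\<rho> p * norm (z p))" using h by (simp add: mult.assoc)
    also have "\<dots> \<le> K * ((\<rho> p)\<^sup>2 + (norm (z p))\<^sup>2)" using a K by (simp add: mult_left_mono)
    finally show "norm (F p) \<le> norm (K * ((\<rho> p)\<^sup>2 + (norm (z p))\<^sup>2))" using K by simp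
  qed
qed


lemma mono3: "0 \<le> (a::real) \<Longrightarrow> a \<le> A \<Longrightarrow> 0 \<le> b \<Longrightarrow> b \<le> B \<Longrightarrow> 0 \<le> c \<Longrightarrow> c \<le> C \<Longrightarrow> a * b * c \<le> A * B * C"
  by (intro mult_mono) (auto intro: order_trans)

lemma mono4: "0 \<le> (a::real) \<Longrightarrow> a \<le> A \<Longrightarrow> 0 \<le> b \<Longrightarrow> b \<le> B \<Longrightarrow> 0 \<le> c \<Longrightarrow> c \<le> C \<Longrightarrow> 0 \<le> d \<Longrightarrow> d \<le> D \<Longrightarrow> a * b * c * d \<le> A * B * C * D"
  by (intro mult_mono) (auto intro: order_trans)

lemma norm_cs2: "norm (cscale c ((X::complex^'n^'m) ** (Y::complex^'p^'n))) \<le> cmod c * norm X * norm Y"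
  by (simp add: norm_cscale mult.assoc mult_left_mono norm_mm)

lemma norm_cs3: "norm (cscale c ((X::complex^'n^'m) ** (Y::complex^'p^'n) ** (Z::complex^'q^'p))) \<le> cmod c * norm X * norm Y * norm Z"
proof -
  have "norm (X ** Y ** Z) \<le> norm X * norm Y * norm Z"
    by (meson norm_mm order_trans mult_right_mono norm_ge_zero)
  then show ?thesis by (simp add: norm_cscale mult.assoc mult_left_mono)
qed

lemma Jerr_eq: "Jerr \<mu> y qA \<alpha> A qB \<beta> B qC \<gamma> C = (\<integral>\<^sup>+p. ennreal ((norm (y p - yhat qA \<alpha> A qB \<beta> B qC \<gamma> C p))\<^sup>2) \<partial>\<mu>)"
  by (simp add: Jerr_def fro_norm_eq)


lemma norm_mm3: "norm ((X::complex^'n^'m) ** (Y::complex^'p^'n) ** (Z::complex^'q^'p)) \<le> norm X * norm Y * norm Z"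
  by (meson norm_mm order_trans mult_right_mono norm_ge_zero)

theorem corollary2p3:
  fixes P :: "(complex^'np) set"
    and \<mu> :: "(complex^'np) measure"
    and y :: "complex^'np \<Rightarrow> complex^'ni^'no"
    and qA qB qC :: nat
    and \<alpha> \<beta> \<gamma> :: "nat \<Rightarrow> complex^'np \<Rightarrow> complex"
    and A :: "nat \<Rightarrow> real^'r^'r"
    and B :: "nat \<Rightarrow> real^'ni^'r"
    and C :: "nat \<Rightarrow> real^'r^'no"
  assumes P_conj: "\<forall>p\<in>P. vconj p \<in> P"
    and space_mu: "space \<mu> = P"
    and mu_conj: "\<forall>S\<in>sets \<mu>. vconj ` S \<in> sets \<mu> \<and> emeasure \<mu> (vconj ` S) = emeasure \<mu> S"
    and y_meas: "y \<in> borel_measurable \<mu>"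
    and y_conj: "\<forall>p\<in>P. mconj (y p) = y (vconj p)"
    and y_L2: "(\<integral>\<^sup>+ p. ennreal ((fro_norm (y p))\<^sup>2) \<partial>\<mu>) < \<infinity>"
    and \<alpha>_meas: "\<forall>i<qA. \<alpha> i \<in> borel_measurable \<mu>"
    and \<beta>_meas: "\<forall>j<qB. \<beta> j \<in> borel_measurable \<mu>"
    and \<gamma>_meas: "\<forall>k<qC. \<gamma> k \<in> borel_measurable \<mu>"
    and \<alpha>_conj: "\<forall>i<qA. \<forall>p\<in>P. cnj (\<alpha> i p) = \<alpha> i (vconj p)"
    and \<beta>_conj: "\<forall>j<qB. \<forall>p\<in>P. cnj (\<beta> j p) = \<beta> j (vconj p)"
    and \<gamma>_conj: "\<forall>k<qC. \<forall>p\<in>P. cnj (\<gamma> k p) = \<gamma> k (vconj p)"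
    and ratio_L2: "(\<integral>\<^sup>+ p. (ennreal ((\<Sum>j<qB. cmod (\<beta> j p)) * (\<Sum>k<qC. cmod (\<gamma> k p)))
                          / ennreal (\<Sum>i<qA. cmod (\<alpha> i p)))\<^sup>2 \<partial>\<mu>) < \<infinity>"
    and A_inv_ae: "AE p in \<mu>. invertible (pmat qA \<alpha> A p)"
    and A_esssup: "\<forall>i<qA. esssup \<mu> (\<lambda>p. ereal (fro_norm (cscale (\<alpha> i p) (matrix_inv (pmat qA \<alpha> A p))))) < \<infinity>"
    and optimal: "\<forall>(A'::nat \<Rightarrow> real^'r^'r) (B'::nat \<Rightarrow> real^'ni^'r) (C'::nat \<Rightarrow> real^'r^'no).
                    (AE p in \<mu>. invertible (pmat qA \<alpha> A' p)) \<longrightarrow>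
                    Jerr \<mu> y qA \<alpha> A qB \<beta> B qC \<gamma> C \<le> Jerr \<mu> y qA \<alpha> A' qB \<beta> B' qC \<gamma> C'"
  shows "(\<forall>k<qC.
            (\<integral>p. cscale (\<gamma> k (vconj p)) (y p ** mstar (xhat qA \<alpha> A qB \<beta> B p)) \<partial>\<mu>) =
            (\<integral>p. cscale (\<gamma> k (vconj p)) (yhat qA \<alpha> A qB \<beta> B qC \<gamma> C p ** mstar (xhat qA \<alpha> A qB \<beta> B p)) \<partial>\<mu>))
       \<and> (\<forall>j<qB.
            (\<integral>p. cscale (\<beta> j (vconj p)) (xdual qA \<alpha> A qC \<gamma> C p ** y p) \<partial>\<mu>) =
            (\<integral>p. cscale (\<beta> j (vconj p)) (xdual qA \<alpha> A qC \<gamma> C p ** yhat qA \<alpha> A qB \<beta> B qC \<gamma> C p) \<partial>\<mu>))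
       \<and> (\<forall>i<qA.
            (\<integral>p. cscale (\<alpha> i (vconj p)) (xdual qA \<alpha> A qC \<gamma> C p ** y p ** mstar (xhat qA \<alpha> A qB \<beta> B p)) \<partial>\<mu>) =
            (\<integral>p. cscale (\<alpha> i (vconj p)) (xdual qA \<alpha> A qC \<gamma> C p ** yhat qA \<alpha> A qB \<beta> B qC \<gamma> C p ** mstar (xhat qA \<alpha> A qB \<beta> B p)) \<partial>\<mu>))"
  proof -
  define Am where "Am = (\<lambda>p. pmat qA \<alpha> A p)"
  define Bm where "Bm = (\<lambda>p. pmat qB \<beta> B p)"
  define Cm where "Cm = (\<lambda>p. pmat qC \<gamma> C p)"
  define Ai where "Ai = (\<lambda>p. matrix_inv (Am p))"
  define xh where "xh = (\<lambda>p. xhat qA \<alpha> A qB \<beta> B p)"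
  define yh where "yh = (\<lambda>p. yhat qA \<alpha> A qB \<beta> B qC \<gamma> C p)"
  define r where "r = (\<lambda>p. y p - yh p)"
  define U where "U = (\<lambda>p. Cm p ** Ai p)"
  define sa where "sa = (\<lambda>p. \<Sum>i<qA. cmod (\<alpha> i p))"
  define sb where "sb = (\<lambda>p. \<Sum>j<qB. cmod (\<beta> j p))"
  define sc where "sc = (\<lambda>p. \<Sum>k<qC. cmod (\<gamma> k p))"
  define \<rho> where "\<rho> = (\<lambda>p. sb p * sc p / sa p)"
  define KB where "KB = (\<Sum>i<qB. norm (cmat (B i)))"
  define KC where "KC = (\<Sum>i<qC. norm (cmat (C i)))"
  have xh_eq: "xh p = Ai p ** Bm p" for p by (simp add: xh_def xhat_def Ai_def Am_def Bm_def)
  have yh_eq: "yh p = Cm p ** xh p" for p by (simp add: yh_def yhat_def xh_def Cm_def)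
  have KB0: "KB \<ge> 0" unfolding KB_def by (simp add: sum_nonneg)
  have KC0: "KC \<ge> 0" unfolding KC_def by (simp add: sum_nonneg)
  have sa0: "sa p \<ge> 0" for p unfolding sa_def by (simp add: sum_nonneg)
  have sb0: "sb p \<ge> 0" for p unfolding sb_def by (simp add: sum_nonneg)
  have sc0: "sc p \<ge> 0" for p unfolding sc_def by (simp add: sum_nonneg)
  have \<rho>0: "\<rho> p \<ge> 0" for p unfolding \<rho>_def using sa0 sb0 sc0 by simp
  have Bb: "norm (Bm p) \<le> KB * sb p" for p unfolding Bm_def KB_def sb_def by (rule norm_pmat)
  have Cb: "norm (Cm p) \<le> KC * sc p" for p unfolding Cm_def KC_def sc_def by (rule norm_pmat)
  have \<alpha>le: "cmod (\<alpha> i p) \<le> sa p" if "i < qA" for i p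
    unfolding sa_def using that by (intro member_le_sum) auto
  have \<beta>le: "cmod (\<beta> i p) \<le> sb p" if "i < qB" for i p
    unfolding sb_def using that by (intro member_le_sum) auto
  have \<gamma>le: "cmod (\<gamma> i p) \<le> sc p" if "i < qC" for i p
    unfolding sc_def using that by (intro member_le_sum) auto

  define Mi where "Mi = (\<lambda>i. max 0 (real_of_ereal (esssup \<mu> (\<lambda>p. ereal (fro_norm (cscale (\<alpha> i p) (matrix_inv (pmat qA \<alpha> A p))))))))"
  define M where "M = (\<Sum>i<qA. Mi i)"
  have M0: "M \<ge> 0" unfolding M_def Mi_def by (simp add: sum_nonneg)
  have MAE: "AE p in \<mu>. \<forall>i\<in>{..<qA}. norm (cscale (\<alpha> i p) (Ai p)) \<le> M"
  proof (rule AE_finite_allI)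
    show "finite {..<qA}" by simp
    fix i assume i: "i \<in> {..<qA}"
    let ?f = "\<lambda>p. ereal (fro_norm (cscale (\<alpha> i p) (matrix_inv (pmat qA \<alpha> A p))))"
    have fin: "esssup \<mu> ?f < \<infinity>" using A_esssup i by auto
    have MiM: "Mi i \<le> M" unfolding M_def using i
      by (intro member_le_sum) (auto simp: Mi_def)
    show "AE p in \<mu>. norm (cscale (\<alpha> i p) (Ai p)) \<le> M"
      using esssup_AE[of ?f \<mu>]
    proof (rule AE_mp, intro AE_I2 impI)
      fix p assume h: "?f p \<le> esssup \<mu> ?f"
      have "esssup \<mu> ?f \<noteq> -\<infinity>" using h by auto
      then obtain E where e: "esssup \<mu> ?f = ereal E" using fin
        by (cases "esssup \<mu> ?f") auto
      have "fro_norm (cscale (\<alpha> i p) (matrix_inv (pmat qA \<alpha> A p))) \<le> E"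
        using h unfolding e by simp
      then have "fro_norm (cscale (\<alpha> i p) (matrix_inv (pmat qA \<alpha> A p))) \<le> real_of_ereal (esssup \<mu> ?f)"
        unfolding e by simp
      then have "norm (cscale (\<alpha> i p) (Ai p)) \<le> Mi i"
        by (simp add: fro_norm_eq Ai_def Am_def Mi_def)
      then show "norm (cscale (\<alpha> i p) (Ai p)) \<le> M" using MiM by simp
    qed
  qed
  define KA where "KA = real qA * M"
  have KA0: "KA \<ge> 0" unfolding KA_def using M0 by simp
  define Gd where "Gd = (\<lambda>p. p \<in> P \<and> invertible (Am p) \<and> (\<forall>i\<in>{..<qA}. norm (cscale (\<alpha> i p) (Ai p)) \<le> M))"
  have AE_Gd: "AE p in \<mu>. Gd p"
  proof -
    have "AE p in \<mu>. p \<in> space \<mu>" by (rule AE_space)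
    then have "AE p in \<mu>. p \<in> P" unfolding space_mu .
    then show ?thesis using A_inv_ae MAE unfolding Gd_def Am_def by eventually_elim auto
  qed

  have cscale0: "cscale 0 X = 0" for X :: "complex^'r^'r" by (simp add: vec_eq_iff)
  have gd_sa: "sa p > 0" if g: "Gd p" for p
  proof (rule ccontr)
    assume "\<not> sa p > 0"
    then have "sa p = 0" using sa0[of p] by simp
    then have "\<forall>i\<in>{..<qA}. cmod (\<alpha> i p) = 0" unfolding sa_def
      by (subst (asm) sum_nonneg_eq_0_iff) auto
    then have "Am p = 0" unfolding Am_def pmat_def by (simp add: cscale0)
    then show False using g not_inv0 unfolding Gd_def by auto
  qed
  have gd_Ai: "norm (Ai p) \<le> KA / sa p" if g: "Gd p" for p
  proof -
    have "sa p * norm (Ai p) = (\<Sum>i<qA. norm (cscale (\<alpha> i p) (Ai p)))"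
      unfolding sa_def by (simp add: sum_distrib_right norm_cscale)
    also have "\<dots> \<le> (\<Sum>i<qA. M)" using g unfolding Gd_def by (intro sum_mono) auto
    also have "\<dots> = KA" by (simp add: KA_def)
    finally show ?thesis using gd_sa[OF g] by (simp add: pos_le_divide_eq mult.commute)
  qed
  have gd_xh: "norm (xh p) \<le> KA * KB * sb p / sa p" if g: "Gd p" for p
  proof -
    have "norm (xh p) \<le> norm (Ai p) * norm (Bm p)" unfolding xh_eq by (rule norm_mm)
    also have "\<dots> \<le> (KA / sa p) * (KB * sb p)"
      using gd_Ai[OF g] Bb[of p] KA0 sa0[of p] by (intro mult_mono) auto
    finally show ?thesis by simp
  qed
  have gd_U: "norm (U p) \<le> KA * KC * sc p / sa p" if g: "Gd p" for p
  proof -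
    have "norm (U p) \<le> norm (Cm p) * norm (Ai p)" unfolding U_def by (rule norm_mm)
    also have "\<dots> \<le> (KC * sc p) * (KA / sa p)"
      using gd_Ai[OF g] Cb[of p] KC0 sc0[of p] by (intro mult_mono) auto
    finally show ?thesis by (simp add: mult_ac)
  qed
  have gd_yh: "norm (yh p) \<le> KA * KB * KC * \<rho> p" if g: "Gd p" for p
  proof -
    have "norm (yh p) \<le> norm (Cm p) * norm (xh p)" unfolding yh_eq by (rule norm_mm)
    also have "\<dots> \<le> (KC * sc p) * (KA * KB * sb p / sa p)"
      using gd_xh[OF g] Cb[of p] KC0 sc0[of p] by (intro mult_mono) auto
    finally show ?thesis by (simp add: \<rho>_def mult_ac)
  qed

  have cj_Am: "Am (vconj p) = mconj (Am p)" if "p \<in> P" for p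
    unfolding Am_def using \<alpha>_conj that by (intro pmat_conj) auto
  have cj_Bm: "Bm (vconj p) = mconj (Bm p)" if "p \<in> P" for p
    unfolding Bm_def using \<beta>_conj that by (intro pmat_conj) auto
  have cj_Cm: "Cm (vconj p) = mconj (Cm p)" if "p \<in> P" for p
    unfolding Cm_def using \<gamma>_conj that by (intro pmat_conj) auto
  have cj_Ai: "Ai (vconj p) = mconj (Ai p)" if g: "Gd p" for p
    using g cj_Am mconj_inv(2) unfolding Gd_def Ai_def by auto
  have cj_xh: "xh (vconj p) = mconj (xh p)" if g: "Gd p" for p
    using g cj_Ai[OF g] cj_Bm unfolding Gd_def by (simp add: xh_eq mconj_mm)
  have cj_yh: "yh (vconj p) = mconj (yh p)" if g: "Gd p" for p
    using g cj_xh[OF g] cj_Cm unfolding Gd_def by (simp add: yh_eq mconj_mm)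
  have cj_r: "r (vconj p) = mconj (r p)" if g: "Gd p" for p
    using g cj_yh[OF g] y_conj unfolding Gd_def by (simp add: r_def mconj_diff)
  have cj_U: "U (vconj p) = mconj (U p)" if g: "Gd p" for p
    using g cj_Ai[OF g] cj_Cm unfolding Gd_def by (simp add: U_def mconj_mm)

  have mAm: "Am \<in> borel_measurable \<mu>" unfolding Am_def using \<alpha>_meas by (rule meas_pmat)
  have mBm: "Bm \<in> borel_measurable \<mu>" unfolding Bm_def using \<beta>_meas by (rule meas_pmat)
  have mCm: "Cm \<in> borel_measurable \<mu>" unfolding Cm_def using \<gamma>_meas by (rule meas_pmat)
  have mAi: "Ai \<in> borel_measurable \<mu>" unfolding Ai_def using mAm by (rule meas_inv)
  have xh_fun: "xh = (\<lambda>p. Ai p ** Bm p)" using xh_eq by auto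
  have mxh: "xh \<in> borel_measurable \<mu>" unfolding xh_fun using mAi mBm by (rule meas_mm)
  have yh_fun: "yh = (\<lambda>p. Cm p ** xh p)" using yh_eq by auto
  have myh: "yh \<in> borel_measurable \<mu>" unfolding yh_fun using mCm mxh by (rule meas_mm)
  have mr: "r \<in> borel_measurable \<mu>" unfolding r_def using y_meas myh by (rule borel_measurable_diff)
  have mU: "U \<in> borel_measurable \<mu>" unfolding U_def using mCm mAi by (rule meas_mm)
  have mcm: "(\<lambda>p. cmod (f i p)) \<in> borel_measurable \<mu>" if "f i \<in> borel_measurable \<mu>" for f :: "nat \<Rightarrow> complex^'np \<Rightarrow> complex" and i
    using that by measurable
  have msa: "sa \<in> borel_measurable \<mu>" unfolding sa_def using \<alpha>_meas mcm
    by (intro borel_measurable_sum) auto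
  have msb: "sb \<in> borel_measurable \<mu>" unfolding sb_def using \<beta>_meas mcm
    by (intro borel_measurable_sum) auto
  have msc: "sc \<in> borel_measurable \<mu>" unfolding sc_def using \<gamma>_meas mcm
    by (intro borel_measurable_sum) auto
  have m\<rho>: "\<rho> \<in> borel_measurable \<mu>" unfolding \<rho>_def using msa msb msc by measurable
  have vm: "vconj \<in> measurable \<mu> \<mu>" by (rule vconj_meas[OF P_conj space_mu mu_conj])
  have mvc: "(\<lambda>p. f (vconj p)) \<in> borel_measurable \<mu>" if "f \<in> borel_measurable \<mu>" for f :: "complex^'np \<Rightarrow> complex"
    using measurable_comp[OF vm that] by (simp add: comp_def)
  have xd_fun: "(\<lambda>p. xdual qA \<alpha> A qC \<gamma> C p) = (\<lambda>p. matrix_inv (mstar (Am p)) ** mstar (Cm p))"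
    by (simp add: xdual_def Am_def Cm_def)
  have mxd: "(\<lambda>p. xdual qA \<alpha> A qC \<gamma> C p) \<in> borel_measurable \<mu>"
    unfolding xd_fun by (intro meas_mm meas_inv meas_mstar mAm mCm)
  have xd_eq: "xdual qA \<alpha> A qC \<gamma> C p = mstar (U p)" if g: "Gd p" for p
    using g mstar_inv(2)[of "Am p"] unfolding Gd_def
    by (simp add: xdual_def U_def Ai_def Am_def Cm_def mstar_mm)

  have iy: "integrable \<mu> (\<lambda>p. (norm (y p))\<^sup>2)"
    by (rule integrableI_nonneg) (use y_meas y_L2 in \<open>auto simp: fro_norm_eq\<close>)
  have i\<rho>: "integrable \<mu> (\<lambda>p. (\<rho> p)\<^sup>2)"
  proof (rule integrableI_nonneg)
    show "(\<lambda>p. (\<rho> p)\<^sup>2) \<in> borel_measurable \<mu>" using m\<rho> by measurable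
    show "AE p in \<mu>. 0 \<le> (\<rho> p)\<^sup>2" by simp
    have "(\<integral>\<^sup>+p. ennreal ((\<rho> p)\<^sup>2) \<partial>\<mu>) = (\<integral>\<^sup>+ p. (ennreal ((\<Sum>j<qB. cmod (\<beta> j p)) * (\<Sum>k<qC. cmod (\<gamma> k p)))
                          / ennreal (\<Sum>i<qA. cmod (\<alpha> i p)))\<^sup>2 \<partial>\<mu>)"
    proof (rule nn_integral_cong_AE)
      show "AE p in \<mu>. ennreal ((\<rho> p)\<^sup>2) = (ennreal ((\<Sum>j<qB. cmod (\<beta> j p)) * (\<Sum>k<qC. cmod (\<gamma> k p)))
                          / ennreal (\<Sum>i<qA. cmod (\<alpha> i p)))\<^sup>2"
        using AE_Gd
      proof (rule AE_mp, intro AE_I2 impI)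
        fix p assume g: "Gd p"
        have "ennreal (sb p * sc p) / ennreal (sa p) = ennreal (\<rho> p)"
          unfolding \<rho>_def using gd_sa[OF g] sb0[of p] sc0[of p] by (simp add: divide_ennreal)
        then show "ennreal ((\<rho> p)\<^sup>2) = (ennreal ((\<Sum>j<qB. cmod (\<beta> j p)) * (\<Sum>k<qC. cmod (\<gamma> k p)))
                          / ennreal (\<Sum>i<qA. cmod (\<alpha> i p)))\<^sup>2"
          using \<rho>0[of p] by (simp add: sa_def sb_def sc_def ennreal_power)
      qed
    qed
    also have "\<dots> < \<infinity>" by (rule ratio_L2)
    finally show "(\<integral>\<^sup>+p. ennreal ((\<rho> p)\<^sup>2) \<partial>\<mu>) < \<infinity>" .
  qed
  have iyh: "integrable \<mu> (\<lambda>p. (norm (yh p))\<^sup>2)"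
    by (rule L2_bound[OF myh i\<rho>, of "KA * KB * KC"]) (use AE_Gd gd_yh in \<open>auto elim: AE_mp\<close>)
  have ir: "integrable \<mu> (\<lambda>p. (norm (r p))\<^sup>2)"
  proof (rule Bochner_Integration.integrable_bound)
    show "integrable \<mu> (\<lambda>p. 2 * (norm (y p))\<^sup>2 + 2 * (norm (yh p))\<^sup>2)" using iy iyh by simp
    show "(\<lambda>p. (norm (r p))\<^sup>2) \<in> borel_measurable \<mu>" using mr by measurable
    show "AE p in \<mu>. norm ((norm (r p))\<^sup>2) \<le> norm (2 * (norm (y p))\<^sup>2 + 2 * (norm (yh p))\<^sup>2)"
    proof (rule AE_I2)
      fix p
      have "norm (r p) \<le> norm (y p) + norm (yh p)" unfolding r_def by (rule norm_triangle_ineq4)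
      then have "(norm (r p))\<^sup>2 \<le> (norm (y p) + norm (yh p))\<^sup>2" by (intro power_mono) auto
      also have "\<dots> \<le> 2 * (norm (y p))\<^sup>2 + 2 * (norm (yh p))\<^sup>2"
        using sum_squares_bound[of "norm (y p)" "norm (yh p)"] by (simp add: power2_eq_square algebra_simps)
      finally show "norm ((norm (r p))\<^sup>2) \<le> norm (2 * (norm (y p))\<^sup>2 + 2 * (norm (yh p))\<^sup>2)" by simp
    qed
  qed

  have mxh': "(\<lambda>p. xhat qA \<alpha> A qB \<beta> B p) \<in> borel_measurable \<mu>" using mxh by (simp add: xh_def)
  have myh': "(\<lambda>p. yhat qA \<alpha> A qB \<beta> B qC \<gamma> C p) \<in> borel_measurable \<mu>" using myh by (simp add: yh_def)
  have J0: "Jerr \<mu> y qA \<alpha> A qB \<beta> B qC \<gamma> C = (\<integral>\<^sup>+p. ennreal ((norm (r p))\<^sup>2) \<partial>\<mu>)"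
    by (simp add: Jerr_eq r_def yh_def)
  have nE: "norm (cmat (eunit a c)) = 1" for a c by (rule norm_cmat_eunit)

  have caseC: "\<forall>k<qC.
            (\<integral>p. cscale (\<gamma> k (vconj p)) (y p ** mstar (xhat qA \<alpha> A qB \<beta> B p)) \<partial>\<mu>) =
            (\<integral>p. cscale (\<gamma> k (vconj p)) (yhat qA \<alpha> A qB \<beta> B qC \<gamma> C p ** mstar (xhat qA \<alpha> A qB \<beta> B p)) \<partial>\<mu>)"
  proof (intro allI impI)
    fix k assume k: "k < qC"
    have gm: "\<gamma> k \<in> borel_measurable \<mu>" using \<gamma>_meas k by auto
    have gc: "\<gamma> k (vconj p) = cnj (\<gamma> k p)" if "p \<in> P" for p using \<gamma>_conj k that by auto
    show "(\<integral>p. cscale (\<gamma> k (vconj p)) (y p ** mstar (xhat qA \<alpha> A qB \<beta> B p)) \<partial>\<mu>) =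
            (\<integral>p. cscale (\<gamma> k (vconj p)) (yhat qA \<alpha> A qB \<beta> B qC \<gamma> C p ** mstar (xhat qA \<alpha> A qB \<beta> B p)) \<partial>\<mu>)"
    proof (rule case_lemma[OF P_conj space_mu mu_conj, where r=r and U="\<lambda>p. mat 1 :: complex^'no^'no" and V=xh and g="\<gamma> k"])
      show "(\<lambda>p. cscale (cnj (\<gamma> k p)) (mstar (mat 1 :: complex^'no^'no) ** r p ** mstar (xh p))) \<in> borel_measurable \<mu>"
        by (intro meas_cscale meas_cnj meas_mm meas_mstar borel_measurable_const mr mxh gm)
      show "integrable \<mu> (\<lambda>p. cscale (\<gamma> k (vconj p)) (y p ** mstar (xhat qA \<alpha> A qB \<beta> B p)))"
      proof (rule prod_integrable[OF _ i\<rho> iy, of _ "KA * KB"])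
        show "(\<lambda>p. cscale (\<gamma> k (vconj p)) (y p ** mstar (xhat qA \<alpha> A qB \<beta> B p))) \<in> borel_measurable \<mu>"
          by (intro meas_cscale mvc gm meas_mm y_meas meas_mstar mxh')
        show "0 \<le> KA * KB" using KA0 KB0 by simp
        show "AE p in \<mu>. 0 \<le> \<rho> p" using \<rho>0 by simp
        show "AE p in \<mu>. norm (cscale (\<gamma> k (vconj p)) (y p ** mstar (xhat qA \<alpha> A qB \<beta> B p))) \<le> KA * KB * \<rho> p * norm (y p)"
          using AE_Gd
        proof (rule AE_mp, intro AE_I2 impI)
          fix p assume g: "Gd p"
          have pP: "p \<in> P" using g by (simp add: Gd_def)
          have "norm (cscale (\<gamma> k (vconj p)) (y p ** mstar (xh p))) \<le> cmod (\<gamma> k (vconj p)) * norm (y p) * norm (mstar (xh p))"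
            by (rule norm_cs2)
          also have "\<dots> \<le> sc p * norm (y p) * (KA * KB * sb p / sa p)"
            using gc[OF pP] \<gamma>le[OF k] gd_xh[OF g] by (intro mono3) (auto simp: norm_mstar)
          also have "\<dots> = KA * KB * \<rho> p * norm (y p)" by (simp add: \<rho>_def field_simps)
          finally show "norm (cscale (\<gamma> k (vconj p)) (y p ** mstar (xhat qA \<alpha> A qB \<beta> B p))) \<le> KA * KB * \<rho> p * norm (y p)"
            by (simp add: xh_def)
        qed
      qed
      show "integrable \<mu> (\<lambda>p. cscale (\<gamma> k (vconj p)) (yhat qA \<alpha> A qB \<beta> B qC \<gamma> C p ** mstar (xhat qA \<alpha> A qB \<beta> B p)))"
      proof (rule prod_integrable[OF _ i\<rho> iyh, of _ "KA * KB"])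
        show "(\<lambda>p. cscale (\<gamma> k (vconj p)) (yhat qA \<alpha> A qB \<beta> B qC \<gamma> C p ** mstar (xhat qA \<alpha> A qB \<beta> B p))) \<in> borel_measurable \<mu>"
          by (intro meas_cscale mvc gm meas_mm myh' meas_mstar mxh')
        show "0 \<le> KA * KB" using KA0 KB0 by simp
        show "AE p in \<mu>. 0 \<le> \<rho> p" using \<rho>0 by simp
        show "AE p in \<mu>. norm (cscale (\<gamma> k (vconj p)) (yhat qA \<alpha> A qB \<beta> B qC \<gamma> C p ** mstar (xhat qA \<alpha> A qB \<beta> B p))) \<le> KA * KB * \<rho> p * norm (yh p)"
          using AE_Gd
        proof (rule AE_mp, intro AE_I2 impI)
          fix p assume g: "Gd p"
          have pP: "p \<in> P" using g by (simp add: Gd_def)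
          have "norm (cscale (\<gamma> k (vconj p)) (yh p ** mstar (xh p))) \<le> cmod (\<gamma> k (vconj p)) * norm (yh p) * norm (mstar (xh p))"
            by (rule norm_cs2)
          also have "\<dots> \<le> sc p * norm (yh p) * (KA * KB * sb p / sa p)"
            using gc[OF pP] \<gamma>le[OF k] gd_xh[OF g] by (intro mono3) (auto simp: norm_mstar)
          also have "\<dots> = KA * KB * \<rho> p * norm (yh p)" by (simp add: \<rho>_def field_simps)
          finally show "norm (cscale (\<gamma> k (vconj p)) (yhat qA \<alpha> A qB \<beta> B qC \<gamma> C p ** mstar (xhat qA \<alpha> A qB \<beta> B p))) \<le> KA * KB * \<rho> p * norm (yh p)"
            by (simp add: xh_def yh_def)
        qed
      qed
      show "AE p in \<mu>. cscale (\<gamma> k (vconj p)) (y p ** mstar (xhat qA \<alpha> A qB \<beta> B p)) -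
                cscale (\<gamma> k (vconj p)) (yhat qA \<alpha> A qB \<beta> B qC \<gamma> C p ** mstar (xhat qA \<alpha> A qB \<beta> B p)) =
                cscale (cnj (\<gamma> k p)) (mstar (mat 1 :: complex^'no^'no) ** r p ** mstar (xh p))"
        using AE_Gd
      proof (rule AE_mp, intro AE_I2 impI)
        fix p assume g: "Gd p"
        have pP: "p \<in> P" using g by (simp add: Gd_def)
        show "cscale (\<gamma> k (vconj p)) (y p ** mstar (xhat qA \<alpha> A qB \<beta> B p)) -
                cscale (\<gamma> k (vconj p)) (yhat qA \<alpha> A qB \<beta> B qC \<gamma> C p ** mstar (xhat qA \<alpha> A qB \<beta> B p)) =
                cscale (cnj (\<gamma> k p)) (mstar (mat 1 :: complex^'no^'no) ** r p ** mstar (xh p))"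
          using gc[OF pP] by (simp add: r_def xh_def yh_def cscale_diff[symmetric] mm_diff_left)
      qed
      show "AE p in \<mu>. cscale (cnj (\<gamma> k (vconj p))) (mstar (mat 1 :: complex^'no^'no) ** r (vconj p) ** mstar (xh (vconj p)))
                       = mconj (cscale (cnj (\<gamma> k p)) (mstar (mat 1 :: complex^'no^'no) ** r p ** mstar (xh p)))"
        using AE_Gd
      proof (rule AE_mp, intro AE_I2 impI)
        fix p assume g: "Gd p"
        have pP: "p \<in> P" using g by (simp add: Gd_def)
        show "cscale (cnj (\<gamma> k (vconj p))) (mstar (mat 1 :: complex^'no^'no) ** r (vconj p) ** mstar (xh (vconj p)))
                       = mconj (cscale (cnj (\<gamma> k p)) (mstar (mat 1 :: complex^'no^'no) ** r p ** mstar (xh p)))"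
          using gc[OF pP] cj_r[OF g] cj_xh[OF g] by (simp add: mconj_cscale mconj_mm mconj_mstar)
      qed
      fix a c
      define D where "D = (\<lambda>p. - cscale (\<gamma> k p) ((mat 1 :: complex^'no^'no) ** cmat (eunit a c) ** xh p))"
      have mD: "D \<in> borel_measurable \<mu>" unfolding D_def
        by (intro borel_measurable_uminus meas_cscale meas_mm borel_measurable_const mxh gm)
      have iD: "integrable \<mu> (\<lambda>p. (norm (D p))\<^sup>2)"
      proof (rule L2_bound[OF mD i\<rho>, of "KA * KB"])
        show "AE p in \<mu>. norm (D p) \<le> KA * KB * \<rho> p"
          using AE_Gd
        proof (rule AE_mp, intro AE_I2 impI)
          fix p assume g: "Gd p"
          have "norm (D p) \<le> cmod (\<gamma> k p) * norm (mat 1 ** cmat (eunit a c) :: complex^'r^'no) * norm (xh p)"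
            unfolding D_def norm_minus_cancel by (rule norm_cs2)
          also have "\<dots> \<le> sc p * 1 * (KA * KB * sb p / sa p)"
            using \<gamma>le[OF k] gd_xh[OF g] by (intro mono3) (auto simp: nE)
          also have "\<dots> = KA * KB * \<rho> p" by (simp add: \<rho>_def field_simps)
          finally show "norm (D p) \<le> KA * KB * \<rho> p" .
        qed
      qed
      have "(\<integral>p. inner (r p) (D p) \<partial>\<mu>) = 0"
      proof (rule variation[OF mr mD _ ir iD _ zero_less_one, of "\<lambda>p. 0"])
        show "(\<lambda>p. 0::real) \<in> borel_measurable \<mu>" by simp
        show "integrable \<mu> (\<lambda>p. (0::real)\<^sup>2)" by simp
        fix t :: real
        show "\<exists>Q. (AE p in \<mu>. norm (Q p) \<le> 0) \<and>
           (\<integral>\<^sup>+p. ennreal ((norm (r p))\<^sup>2) \<partial>\<mu>) \<le> (\<integral>\<^sup>+p. ennreal ((norm (r p + t *\<^sub>R D p + t\<^sup>2 *\<^sub>R Q p))\<^sup>2) \<partial>\<mu>)"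
        proof (intro exI conjI)
          show "AE p in \<mu>. norm ((\<lambda>p. 0::complex^'ni^'no) p) \<le> 0" by simp
          define C' where "C' = C(k := C k + t *\<^sub>R eunit a c)"
          have "Jerr \<mu> y qA \<alpha> A qB \<beta> B qC \<gamma> C \<le> Jerr \<mu> y qA \<alpha> A qB \<beta> B qC \<gamma> C'"
            using optimal A_inv_ae by blast
          also have "Jerr \<mu> y qA \<alpha> A qB \<beta> B qC \<gamma> C' = (\<integral>\<^sup>+p. ennreal ((norm (r p + t *\<^sub>R D p + t\<^sup>2 *\<^sub>R (\<lambda>p. 0) p))\<^sup>2) \<partial>\<mu>)"
          proof -
            have "y p - yhat qA \<alpha> A qB \<beta> B qC \<gamma> C' p = r p + t *\<^sub>R D p + t\<^sup>2 *\<^sub>R (\<lambda>p. 0) p" for p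
            proof -
              have "yhat qA \<alpha> A qB \<beta> B qC \<gamma> C' p = (Cm p + t *\<^sub>R cscale (\<gamma> k p) (cmat (eunit a c))) ** xh p"
                by (simp add: yhat_def C'_def pmat_upd[OF k] Cm_def xh_def)
              also have "\<dots> = yh p + t *\<^sub>R cscale (\<gamma> k p) (cmat (eunit a c) ** xh p)"
                by (simp add: mm_add_left mm_scaleR_left cscale_mm_left yh_eq)
              finally show ?thesis by (simp add: r_def D_def algebra_simps)
            qed
            then show ?thesis by (simp add: Jerr_eq)
          qed
          finally show "(\<integral>\<^sup>+p. ennreal ((norm (r p))\<^sup>2) \<partial>\<mu>) \<le> (\<integral>\<^sup>+p. ennreal ((norm (r p + t *\<^sub>R D p + t\<^sup>2 *\<^sub>R (\<lambda>p. 0) p))\<^sup>2) \<partial>\<mu>)"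
            using J0 by simp
        qed
      qed
      then show "(\<integral>p. inner (r p) (cscale (\<gamma> k p) ((mat 1 :: complex^'no^'no) ** cmat (eunit a c) ** xh p)) \<partial>\<mu>) = 0"
        by (simp add: D_def)
    qed
  qed

  have caseB: "\<forall>j<qB.
            (\<integral>p. cscale (\<beta> j (vconj p)) (xdual qA \<alpha> A qC \<gamma> C p ** y p) \<partial>\<mu>) =
            (\<integral>p. cscale (\<beta> j (vconj p)) (xdual qA \<alpha> A qC \<gamma> C p ** yhat qA \<alpha> A qB \<beta> B qC \<gamma> C p) \<partial>\<mu>)"
  proof (intro allI impI)
    fix j assume j: "j < qB"
    have gm: "\<beta> j \<in> borel_measurable \<mu>" using \<beta>_meas j by auto
    have gc: "\<beta> j (vconj p) = cnj (\<beta> j p)" if "p \<in> P" for p using \<beta>_conj j that by auto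
    show "(\<integral>p. cscale (\<beta> j (vconj p)) (xdual qA \<alpha> A qC \<gamma> C p ** y p) \<partial>\<mu>) =
            (\<integral>p. cscale (\<beta> j (vconj p)) (xdual qA \<alpha> A qC \<gamma> C p ** yhat qA \<alpha> A qB \<beta> B qC \<gamma> C p) \<partial>\<mu>)"
    proof (rule case_lemma[OF P_conj space_mu mu_conj, where r=r and U=U and V="\<lambda>p. mat 1 :: complex^'ni^'ni" and g="\<beta> j"])
      show "(\<lambda>p. cscale (cnj (\<beta> j p)) (mstar (U p) ** r p ** mstar (mat 1 :: complex^'ni^'ni))) \<in> borel_measurable \<mu>"
        by (intro meas_cscale meas_cnj meas_mm meas_mstar borel_measurable_const mr mU gm)
      show "integrable \<mu> (\<lambda>p. cscale (\<beta> j (vconj p)) (xdual qA \<alpha> A qC \<gamma> C p ** y p))"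
      proof (rule prod_integrable[OF _ i\<rho> iy, of _ "KA * KC"])
        show "(\<lambda>p. cscale (\<beta> j (vconj p)) (xdual qA \<alpha> A qC \<gamma> C p ** y p)) \<in> borel_measurable \<mu>"
          by (intro meas_cscale mvc gm meas_mm y_meas mxd)
        show "0 \<le> KA * KC" using KA0 KC0 by simp
        show "AE p in \<mu>. 0 \<le> \<rho> p" using \<rho>0 by simp
        show "AE p in \<mu>. norm (cscale (\<beta> j (vconj p)) (xdual qA \<alpha> A qC \<gamma> C p ** y p)) \<le> KA * KC * \<rho> p * norm (y p)"
          using AE_Gd
        proof (rule AE_mp, intro AE_I2 impI)
          fix p assume g: "Gd p"
          have pP: "p \<in> P" using g by (simp add: Gd_def)
          have "norm (cscale (\<beta> j (vconj p)) (mstar (U p) ** y p)) \<le> cmod (\<beta> j (vconj p)) * norm (mstar (U p)) * norm (y p)"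
            by (rule norm_cs2)
          also have "\<dots> \<le> sb p * (KA * KC * sc p / sa p) * norm (y p)"
            using gc[OF pP] \<beta>le[OF j] gd_U[OF g] by (intro mono3) (auto simp: norm_mstar)
          also have "\<dots> = KA * KC * \<rho> p * norm (y p)" by (simp add: \<rho>_def field_simps)
          finally show "norm (cscale (\<beta> j (vconj p)) (xdual qA \<alpha> A qC \<gamma> C p ** y p)) \<le> KA * KC * \<rho> p * norm (y p)"
            by (simp add: xd_eq[OF g])
        qed
      qed
      show "integrable \<mu> (\<lambda>p. cscale (\<beta> j (vconj p)) (xdual qA \<alpha> A qC \<gamma> C p ** yhat qA \<alpha> A qB \<beta> B qC \<gamma> C p))"
      proof (rule prod_integrable[OF _ i\<rho> iyh, of _ "KA * KC"])
        show "(\<lambda>p. cscale (\<beta> j (vconj p)) (xdual qA \<alpha> A qC \<gamma> C p ** yhat qA \<alpha> A qB \<beta> B qC \<gamma> C p)) \<in> borel_measurable \<mu>"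
          by (intro meas_cscale mvc gm meas_mm myh' mxd)
        show "0 \<le> KA * KC" using KA0 KC0 by simp
        show "AE p in \<mu>. 0 \<le> \<rho> p" using \<rho>0 by simp
        show "AE p in \<mu>. norm (cscale (\<beta> j (vconj p)) (xdual qA \<alpha> A qC \<gamma> C p ** yhat qA \<alpha> A qB \<beta> B qC \<gamma> C p)) \<le> KA * KC * \<rho> p * norm (yh p)"
          using AE_Gd
        proof (rule AE_mp, intro AE_I2 impI)
          fix p assume g: "Gd p"
          have pP: "p \<in> P" using g by (simp add: Gd_def)
          have "norm (cscale (\<beta> j (vconj p)) (mstar (U p) ** yh p)) \<le> cmod (\<beta> j (vconj p)) * norm (mstar (U p)) * norm (yh p)"
            by (rule norm_cs2)
          also have "\<dots> \<le> sb p * (KA * KC * sc p / sa p) * norm (yh p)"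
            using gc[OF pP] \<beta>le[OF j] gd_U[OF g] by (intro mono3) (auto simp: norm_mstar)
          also have "\<dots> = KA * KC * \<rho> p * norm (yh p)" by (simp add: \<rho>_def field_simps)
          finally show "norm (cscale (\<beta> j (vconj p)) (xdual qA \<alpha> A qC \<gamma> C p ** yhat qA \<alpha> A qB \<beta> B qC \<gamma> C p)) \<le> KA * KC * \<rho> p * norm (yh p)"
            by (simp add: xd_eq[OF g] yh_def)
        qed
      qed
      show "AE p in \<mu>. cscale (\<beta> j (vconj p)) (xdual qA \<alpha> A qC \<gamma> C p ** y p) -
                cscale (\<beta> j (vconj p)) (xdual qA \<alpha> A qC \<gamma> C p ** yhat qA \<alpha> A qB \<beta> B qC \<gamma> C p) =
                cscale (cnj (\<beta> j p)) (mstar (U p) ** r p ** mstar (mat 1 :: complex^'ni^'ni))"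
        using AE_Gd
      proof (rule AE_mp, intro AE_I2 impI)
        fix p assume g: "Gd p"
        have pP: "p \<in> P" using g by (simp add: Gd_def)
        show "cscale (\<beta> j (vconj p)) (xdual qA \<alpha> A qC \<gamma> C p ** y p) -
                cscale (\<beta> j (vconj p)) (xdual qA \<alpha> A qC \<gamma> C p ** yhat qA \<alpha> A qB \<beta> B qC \<gamma> C p) =
                cscale (cnj (\<beta> j p)) (mstar (U p) ** r p ** mstar (mat 1 :: complex^'ni^'ni))"
          using gc[OF pP] by (simp add: xd_eq[OF g] r_def yh_def cscale_diff[symmetric] mm_diff_right)
      qed
      show "AE p in \<mu>. cscale (cnj (\<beta> j (vconj p))) (mstar (U (vconj p)) ** r (vconj p) ** mstar (mat 1 :: complex^'ni^'ni))
                       = mconj (cscale (cnj (\<beta> j p)) (mstar (U p) ** r p ** mstar (mat 1 :: complex^'ni^'ni)))"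
        using AE_Gd
      proof (rule AE_mp, intro AE_I2 impI)
        fix p assume g: "Gd p"
        have pP: "p \<in> P" using g by (simp add: Gd_def)
        show "cscale (cnj (\<beta> j (vconj p))) (mstar (U (vconj p)) ** r (vconj p) ** mstar (mat 1 :: complex^'ni^'ni))
                       = mconj (cscale (cnj (\<beta> j p)) (mstar (U p) ** r p ** mstar (mat 1 :: complex^'ni^'ni)))"
          using gc[OF pP] cj_r[OF g] cj_U[OF g] by (simp add: mconj_cscale mconj_mm mconj_mstar)
      qed
      fix a :: 'r and c :: 'ni
      define D where "D = (\<lambda>p. - cscale (\<beta> j p) (U p ** cmat (eunit a c)))"
      have mD: "D \<in> borel_measurable \<mu>" unfolding D_def
        by (intro borel_measurable_uminus meas_cscale meas_mm borel_measurable_const mU gm)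
      have iD: "integrable \<mu> (\<lambda>p. (norm (D p))\<^sup>2)"
      proof (rule L2_bound[OF mD i\<rho>, of "KA * KC"])
        show "AE p in \<mu>. norm (D p) \<le> KA * KC * \<rho> p"
          using AE_Gd
        proof (rule AE_mp, intro AE_I2 impI)
          fix p assume g: "Gd p"
          have "norm (D p) \<le> cmod (\<beta> j p) * norm (U p) * norm (cmat (eunit a c) :: complex^'ni^'r)"
            unfolding D_def norm_minus_cancel by (rule norm_cs2)
          also have "\<dots> \<le> sb p * (KA * KC * sc p / sa p) * 1"
            using \<beta>le[OF j] gd_U[OF g] by (intro mono3) (auto simp: nE)
          also have "\<dots> = KA * KC * \<rho> p" by (simp add: \<rho>_def field_simps)
          finally show "norm (D p) \<le> KA * KC * \<rho> p" .
        qed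
      qed
      have "(\<integral>p. inner (r p) (D p) \<partial>\<mu>) = 0"
      proof (rule variation[OF mr mD _ ir iD _ zero_less_one, of "\<lambda>p. 0"])
        show "(\<lambda>p. 0::real) \<in> borel_measurable \<mu>" by simp
        show "integrable \<mu> (\<lambda>p. (0::real)\<^sup>2)" by simp
        fix t :: real
        show "\<exists>Q. (AE p in \<mu>. norm (Q p) \<le> 0) \<and>
           (\<integral>\<^sup>+p. ennreal ((norm (r p))\<^sup>2) \<partial>\<mu>) \<le> (\<integral>\<^sup>+p. ennreal ((norm (r p + t *\<^sub>R D p + t\<^sup>2 *\<^sub>R Q p))\<^sup>2) \<partial>\<mu>)"
        proof (intro exI conjI)
          show "AE p in \<mu>. norm ((\<lambda>p. 0::complex^'ni^'no) p) \<le> 0" by simp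
          define B' where "B' = B(j := B j + t *\<^sub>R eunit a c)"
          have "Jerr \<mu> y qA \<alpha> A qB \<beta> B qC \<gamma> C \<le> Jerr \<mu> y qA \<alpha> A qB \<beta> B' qC \<gamma> C"
            using optimal A_inv_ae by blast
          also have "Jerr \<mu> y qA \<alpha> A qB \<beta> B' qC \<gamma> C = (\<integral>\<^sup>+p. ennreal ((norm (r p + t *\<^sub>R D p + t\<^sup>2 *\<^sub>R (\<lambda>p. 0) p))\<^sup>2) \<partial>\<mu>)"
          proof -
            have "y p - yhat qA \<alpha> A qB \<beta> B' qC \<gamma> C p = r p + t *\<^sub>R D p + t\<^sup>2 *\<^sub>R (\<lambda>p. 0) p" for p
            proof -
              have "yhat qA \<alpha> A qB \<beta> B' qC \<gamma> C p = Cm p ** (Ai p ** (Bm p + t *\<^sub>R cscale (\<beta> j p) (cmat (eunit a c))))"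
                by (simp add: yhat_def xhat_def B'_def pmat_upd[OF j] Cm_def Ai_def Am_def Bm_def)
              also have "\<dots> = yh p + t *\<^sub>R cscale (\<beta> j p) (U p ** cmat (eunit a c))"
                by (simp add: matrix_add_ldistrib mm_scaleR_right cscale_mm_right yh_eq xh_eq U_def matrix_mul_assoc)
              finally show ?thesis by (simp add: r_def D_def algebra_simps)
            qed
            then show ?thesis by (simp add: Jerr_eq)
          qed
          finally show "(\<integral>\<^sup>+p. ennreal ((norm (r p))\<^sup>2) \<partial>\<mu>) \<le> (\<integral>\<^sup>+p. ennreal ((norm (r p + t *\<^sub>R D p + t\<^sup>2 *\<^sub>R (\<lambda>p. 0) p))\<^sup>2) \<partial>\<mu>)"
            using J0 by simp
        qed
      qed
      then show "(\<integral>p. inner (r p) (cscale (\<beta> j p) (U p ** cmat (eunit a c) ** (mat 1 :: complex^'ni^'ni))) \<partial>\<mu>) = 0"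
        by (simp add: D_def)
    qed
  qed

  have caseA: "\<forall>i<qA.
            (\<integral>p. cscale (\<alpha> i (vconj p)) (xdual qA \<alpha> A qC \<gamma> C p ** y p ** mstar (xhat qA \<alpha> A qB \<beta> B p)) \<partial>\<mu>) =
            (\<integral>p. cscale (\<alpha> i (vconj p)) (xdual qA \<alpha> A qC \<gamma> C p ** yhat qA \<alpha> A qB \<beta> B qC \<gamma> C p ** mstar (xhat qA \<alpha> A qB \<beta> B p)) \<partial>\<mu>)"
  proof (intro allI impI)
    fix i assume i: "i < qA"
    have gm: "\<alpha> i \<in> borel_measurable \<mu>" using \<alpha>_meas i by auto
    have gc: "\<alpha> i (vconj p) = cnj (\<alpha> i p)" if "p \<in> P" for p using \<alpha>_conj i that by auto
    define KK where "KK = KA * KC * (KA * KB)"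
    have KK0: "KK \<ge> 0" using KA0 KB0 KC0 by (simp add: KK_def)
    have bnd: "sa p * (KA * KC * sc p / sa p) * z * (KA * KB * sb p / sa p) = KK * \<rho> p * z" if g: "Gd p" for p z
      using gd_sa[OF g] by (simp add: KK_def \<rho>_def field_simps)
    show "(\<integral>p. cscale (\<alpha> i (vconj p)) (xdual qA \<alpha> A qC \<gamma> C p ** y p ** mstar (xhat qA \<alpha> A qB \<beta> B p)) \<partial>\<mu>) =
            (\<integral>p. cscale (\<alpha> i (vconj p)) (xdual qA \<alpha> A qC \<gamma> C p ** yhat qA \<alpha> A qB \<beta> B qC \<gamma> C p ** mstar (xhat qA \<alpha> A qB \<beta> B p)) \<partial>\<mu>)"
    proof (rule case_lemma[OF P_conj space_mu mu_conj, where r=r and U=U and V=xh and g="\<alpha> i"])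
      show "(\<lambda>p. cscale (cnj (\<alpha> i p)) (mstar (U p) ** r p ** mstar (xh p))) \<in> borel_measurable \<mu>"
        by (intro meas_cscale meas_cnj meas_mm meas_mstar mr mU mxh gm)
      show "integrable \<mu> (\<lambda>p. cscale (\<alpha> i (vconj p)) (xdual qA \<alpha> A qC \<gamma> C p ** y p ** mstar (xhat qA \<alpha> A qB \<beta> B p)))"
      proof (rule prod_integrable[OF _ i\<rho> iy KK0])
        show "(\<lambda>p. cscale (\<alpha> i (vconj p)) (xdual qA \<alpha> A qC \<gamma> C p ** y p ** mstar (xhat qA \<alpha> A qB \<beta> B p))) \<in> borel_measurable \<mu>"
          by (intro meas_cscale mvc gm meas_mm y_meas mxd meas_mstar mxh')
        show "AE p in \<mu>. 0 \<le> \<rho> p" using \<rho>0 by simp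
        show "AE p in \<mu>. norm (cscale (\<alpha> i (vconj p)) (xdual qA \<alpha> A qC \<gamma> C p ** y p ** mstar (xhat qA \<alpha> A qB \<beta> B p))) \<le> KK * \<rho> p * norm (y p)"
          using AE_Gd
        proof (rule AE_mp, intro AE_I2 impI)
          fix p assume g: "Gd p"
          have pP: "p \<in> P" using g by (simp add: Gd_def)
          have "norm (cscale (\<alpha> i (vconj p)) (mstar (U p) ** y p ** mstar (xh p))) \<le> cmod (\<alpha> i (vconj p)) * norm (mstar (U p)) * norm (y p) * norm (mstar (xh p))"
            by (rule norm_cs3)
          also have "\<dots> \<le> sa p * (KA * KC * sc p / sa p) * norm (y p) * (KA * KB * sb p / sa p)"
            using gc[OF pP] \<alpha>le[OF i] gd_U[OF g] gd_xh[OF g] by (intro mono4) (auto simp: norm_mstar)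
          also have "\<dots> = KK * \<rho> p * norm (y p)" by (rule bnd[OF g])
          finally show "norm (cscale (\<alpha> i (vconj p)) (xdual qA \<alpha> A qC \<gamma> C p ** y p ** mstar (xhat qA \<alpha> A qB \<beta> B p))) \<le> KK * \<rho> p * norm (y p)"
            by (simp add: xd_eq[OF g] xh_def)
        qed
      qed
      show "integrable \<mu> (\<lambda>p. cscale (\<alpha> i (vconj p)) (xdual qA \<alpha> A qC \<gamma> C p ** yhat qA \<alpha> A qB \<beta> B qC \<gamma> C p ** mstar (xhat qA \<alpha> A qB \<beta> B p)))"
      proof (rule prod_integrable[OF _ i\<rho> iyh KK0])
        show "(\<lambda>p. cscale (\<alpha> i (vconj p)) (xdual qA \<alpha> A qC \<gamma> C p ** yhat qA \<alpha> A qB \<beta> B qC \<gamma> C p ** mstar (xhat qA \<alpha> A qB \<beta> B p))) \<in> borel_measurable \<mu>"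
          by (intro meas_cscale mvc gm meas_mm myh' mxd meas_mstar mxh')
        show "AE p in \<mu>. 0 \<le> \<rho> p" using \<rho>0 by simp
        show "AE p in \<mu>. norm (cscale (\<alpha> i (vconj p)) (xdual qA \<alpha> A qC \<gamma> C p ** yhat qA \<alpha> A qB \<beta> B qC \<gamma> C p ** mstar (xhat qA \<alpha> A qB \<beta> B p))) \<le> KK * \<rho> p * norm (yh p)"
          using AE_Gd
        proof (rule AE_mp, intro AE_I2 impI)
          fix p assume g: "Gd p"
          have pP: "p \<in> P" using g by (simp add: Gd_def)
          have "norm (cscale (\<alpha> i (vconj p)) (mstar (U p) ** yh p ** mstar (xh p))) \<le> cmod (\<alpha> i (vconj p)) * norm (mstar (U p)) * norm (yh p) * norm (mstar (xh p))"
            by (rule norm_cs3)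
          also have "\<dots> \<le> sa p * (KA * KC * sc p / sa p) * norm (yh p) * (KA * KB * sb p / sa p)"
            using gc[OF pP] \<alpha>le[OF i] gd_U[OF g] gd_xh[OF g] by (intro mono4) (auto simp: norm_mstar)
          also have "\<dots> = KK * \<rho> p * norm (yh p)" by (rule bnd[OF g])
          finally show "norm (cscale (\<alpha> i (vconj p)) (xdual qA \<alpha> A qC \<gamma> C p ** yhat qA \<alpha> A qB \<beta> B qC \<gamma> C p ** mstar (xhat qA \<alpha> A qB \<beta> B p))) \<le> KK * \<rho> p * norm (yh p)"
            by (simp add: xd_eq[OF g] xh_def yh_def)
        qed
      qed
      show "AE p in \<mu>. cscale (\<alpha> i (vconj p)) (xdual qA \<alpha> A qC \<gamma> C p ** y p ** mstar (xhat qA \<alpha> A qB \<beta> B p)) -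
                cscale (\<alpha> i (vconj p)) (xdual qA \<alpha> A qC \<gamma> C p ** yhat qA \<alpha> A qB \<beta> B qC \<gamma> C p ** mstar (xhat qA \<alpha> A qB \<beta> B p)) =
                cscale (cnj (\<alpha> i p)) (mstar (U p) ** r p ** mstar (xh p))"
        using AE_Gd
      proof (rule AE_mp, intro AE_I2 impI)
        fix p assume g: "Gd p"
        have pP: "p \<in> P" using g by (simp add: Gd_def)
        have e: "mstar (U p) ** r p ** mstar (xh p) = mstar (U p) ** y p ** mstar (xh p) - mstar (U p) ** yh p ** mstar (xh p)"
          by (simp add: r_def mm_diff_right mm_diff_left)
        show "cscale (\<alpha> i (vconj p)) (xdual qA \<alpha> A qC \<gamma> C p ** y p ** mstar (xhat qA \<alpha> A qB \<beta> B p)) -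
                cscale (\<alpha> i (vconj p)) (xdual qA \<alpha> A qC \<gamma> C p ** yhat qA \<alpha> A qB \<beta> B qC \<gamma> C p ** mstar (xhat qA \<alpha> A qB \<beta> B p)) =
                cscale (cnj (\<alpha> i p)) (mstar (U p) ** r p ** mstar (xh p))"
          unfolding e using gc[OF pP] by (simp add: xd_eq[OF g] yh_def xh_def cscale_diff)
      qed
      show "AE p in \<mu>. cscale (cnj (\<alpha> i (vconj p))) (mstar (U (vconj p)) ** r (vconj p) ** mstar (xh (vconj p)))
                       = mconj (cscale (cnj (\<alpha> i p)) (mstar (U p) ** r p ** mstar (xh p)))"
        using AE_Gd
      proof (rule AE_mp, intro AE_I2 impI)
        fix p assume g: "Gd p"
        have pP: "p \<in> P" using g by (simp add: Gd_def)
        show "cscale (cnj (\<alpha> i (vconj p))) (mstar (U (vconj p)) ** r (vconj p) ** mstar (xh (vconj p)))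
                       = mconj (cscale (cnj (\<alpha> i p)) (mstar (U p) ** r p ** mstar (xh p)))"
          using gc[OF pP] cj_r[OF g] cj_U[OF g] cj_xh[OF g] by (simp add: mconj_cscale mconj_mm mconj_mstar)
      qed
      fix a :: 'r and c :: 'r
      define F where "F = (\<lambda>p. cscale (\<alpha> i p) (cmat (eunit a c)))"
      define D where "D = (\<lambda>p. U p ** F p ** xh p)"
      have mF: "F \<in> borel_measurable \<mu>" unfolding F_def
        by (intro meas_cscale borel_measurable_const gm)
      have mD: "D \<in> borel_measurable \<mu>" unfolding D_def
        by (intro meas_mm mU mF mxh)
      have nF: "norm (F p) \<le> sa p" for p
        unfolding F_def by (simp add: norm_cscale nE \<alpha>le[OF i])
      have iD: "integrable \<mu> (\<lambda>p. (norm (D p))\<^sup>2)"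
      proof (rule L2_bound[OF mD i\<rho>, of KK])
        show "AE p in \<mu>. norm (D p) \<le> KK * \<rho> p"
          using AE_Gd
        proof (rule AE_mp, intro AE_I2 impI)
          fix p assume g: "Gd p"
          have "norm (D p) \<le> norm (U p) * norm (F p) * norm (xh p)"
            unfolding D_def by (rule norm_mm3)
          also have "\<dots> \<le> (KA * KC * sc p / sa p) * sa p * (KA * KB * sb p / sa p)"
            using gd_U[OF g] nF[of p] gd_xh[OF g] by (intro mono3) auto
          also have "\<dots> = KK * \<rho> p * 1" using bnd[OF g, of 1] by (simp add: mult_ac)
          finally show "norm (D p) \<le> KK * \<rho> p" by simp
        qed
      qed
      define G where "G = (\<lambda>p. (2 * M) * KK * \<rho> p)"
      have mG: "G \<in> borel_measurable \<mu>" unfolding G_def using m\<rho> by measurable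
      have iG: "integrable \<mu> (\<lambda>p. (G p)\<^sup>2)" unfolding G_def using i\<rho> by (simp add: power_mult_distrib)
      define \<delta> where "\<delta> = 1 / (2 * (M + 1))"
      have \<delta>0: "\<delta> > 0" using M0 by (simp add: \<delta>_def)
      have "(\<integral>p. inner (r p) (D p) \<partial>\<mu>) = 0"
      proof (rule variation[OF mr mD mG ir iD iG \<delta>0])
        fix t :: real assume t0: "0 < \<bar>t\<bar>" and t\<delta>: "\<bar>t\<bar> < \<delta>"
        have tM: "\<bar>t\<bar> * M \<le> 1/2"
        proof -
          have "\<bar>t\<bar> * M \<le> \<delta> * M" using t\<delta> M0 by (simp add: mult_right_mono)
          also have "\<delta> * M \<le> 1/2" using M0 by (simp add: \<delta>_def field_simps)
          finally show ?thesis .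
        qed
        define A' where "A' = A(i := A i + t *\<^sub>R eunit a c)"
        have Am': "pmat qA \<alpha> A' p = Am p + t *\<^sub>R F p" for p
          by (simp add: A'_def pmat_upd[OF i] Am_def F_def)
        define Q where "Q = (\<lambda>p. - (U p ** (F p ** matrix_inv (Am p + t *\<^sub>R F p) ** F p) ** xh p))"
        have pt: "invertible (Am p + t *\<^sub>R F p) \<and>
                  matrix_inv (Am p + t *\<^sub>R F p) = Ai p - t *\<^sub>R (Ai p ** F p ** Ai p) + t\<^sup>2 *\<^sub>R (Ai p ** F p ** matrix_inv (Am p + t *\<^sub>R F p) ** F p ** Ai p) \<and>
                  norm (F p ** matrix_inv (Am p + t *\<^sub>R F p) ** F p) \<le> 2 * M * cmod (\<alpha> i p)" if g: "Gd p" for p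
        proof -
          have inv: "invertible (Am p)" and N: "norm (cscale (\<alpha> i p) (matrix_inv (Am p))) \<le> M"
            using g i unfolding Gd_def Ai_def by auto
          have E1: "norm (cmat (eunit a c)) \<le> 1" by (simp add: nE)
          show ?thesis using pert_A[OF inv N E1 tM] by (simp add: F_def Ai_def)
        qed
        show "\<exists>Q. (AE p in \<mu>. norm (Q p) \<le> G p) \<and>
           (\<integral>\<^sup>+p. ennreal ((norm (r p))\<^sup>2) \<partial>\<mu>) \<le> (\<integral>\<^sup>+p. ennreal ((norm (r p + t *\<^sub>R D p + t\<^sup>2 *\<^sub>R Q p))\<^sup>2) \<partial>\<mu>)"
        proof (intro exI conjI)
          show "AE p in \<mu>. norm (Q p) \<le> G p"
            using AE_Gd
          proof (rule AE_mp, intro AE_I2 impI)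
            fix p assume g: "Gd p"
            have "norm (Q p) \<le> norm (U p) * norm (F p ** matrix_inv (Am p + t *\<^sub>R F p) ** F p) * norm (xh p)"
              unfolding Q_def norm_minus_cancel by (rule norm_mm3)
            also have "\<dots> \<le> (KA * KC * sc p / sa p) * (2 * M * sa p) * (KA * KB * sb p / sa p)"
            proof -
              have "2 * M * cmod (\<alpha> i p) \<le> 2 * M * sa p"
                using \<alpha>le[OF i, of p] M0 by (intro mult_left_mono) auto
              then have "norm (F p ** matrix_inv (Am p + t *\<^sub>R F p) ** F p) \<le> 2 * M * sa p"
                using pt[OF g] by linarith
              then show ?thesis using gd_U[OF g] gd_xh[OF g] by (intro mono3) auto
            qed
            also have "\<dots> = G p" using gd_sa[OF g] by (simp add: G_def KK_def \<rho>_def field_simps)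
            finally show "norm (Q p) \<le> G p" .
          qed
          have "Jerr \<mu> y qA \<alpha> A qB \<beta> B qC \<gamma> C \<le> Jerr \<mu> y qA \<alpha> A' qB \<beta> B qC \<gamma> C"
          proof -
            have "AE p in \<mu>. invertible (pmat qA \<alpha> A' p)"
              using AE_Gd by (rule AE_mp) (auto simp: Am' pt)
            then show ?thesis using optimal by blast
          qed
          also have "Jerr \<mu> y qA \<alpha> A' qB \<beta> B qC \<gamma> C = (\<integral>\<^sup>+p. ennreal ((norm (r p + t *\<^sub>R D p + t\<^sup>2 *\<^sub>R Q p))\<^sup>2) \<partial>\<mu>)"
            unfolding Jerr_eq
          proof (rule nn_integral_cong_AE)
            show "AE p in \<mu>. ennreal ((norm (y p - yhat qA \<alpha> A' qB \<beta> B qC \<gamma> C p))\<^sup>2) = ennreal ((norm (r p + t *\<^sub>R D p + t\<^sup>2 *\<^sub>R Q p))\<^sup>2)"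
              using AE_Gd
            proof (rule AE_mp, intro AE_I2 impI)
              fix p assume g: "Gd p"
              define Ai' where "Ai' = matrix_inv (Am p + t *\<^sub>R F p)"
              have inv': "Ai' = Ai p - t *\<^sub>R (Ai p ** F p ** Ai p) + t\<^sup>2 *\<^sub>R (Ai p ** F p ** Ai' ** F p ** Ai p)"
                using pt[OF g] by (simp add: Ai'_def)
              have "yhat qA \<alpha> A' qB \<beta> B qC \<gamma> C p = Cm p ** (Ai' ** Bm p)"
                by (simp add: yhat_def xhat_def Am' Ai'_def Cm_def Bm_def)
              also have "\<dots> = yh p - t *\<^sub>R D p - t\<^sup>2 *\<^sub>R Q p"
              proof -
                have s1: "Ai' ** Bm p = Ai p ** Bm p - t *\<^sub>R (Ai p ** F p ** Ai p ** Bm p) + t\<^sup>2 *\<^sub>R (Ai p ** F p ** Ai' ** F p ** Ai p ** Bm p)"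
                  by (subst inv') (simp only: mm_add_left mm_diff_left mm_scaleR_left)
                have s2: "Cm p ** (Ai' ** Bm p) = Cm p ** (Ai p ** Bm p) - t *\<^sub>R (Cm p ** (Ai p ** F p ** Ai p ** Bm p)) + t\<^sup>2 *\<^sub>R (Cm p ** (Ai p ** F p ** Ai' ** F p ** Ai p ** Bm p))"
                  unfolding s1 by (simp only: matrix_add_ldistrib mm_diff_right mm_scaleR_right)
                have s3: "Cm p ** (Ai p ** Bm p) = yh p" by (simp add: yh_eq xh_eq)
                have s4: "Cm p ** (Ai p ** F p ** Ai p ** Bm p) = D p"
                  by (simp only: D_def U_def xh_eq matrix_mul_assoc)
                have s5: "Cm p ** (Ai p ** F p ** Ai' ** F p ** Ai p ** Bm p) = - Q p"
                  by (simp only: Q_def U_def xh_eq Ai'_def matrix_mul_assoc minus_minus)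
                show ?thesis unfolding s2 s3 s4 s5 by (simp add: algebra_simps)
              qed
              finally have yy: "yhat qA \<alpha> A' qB \<beta> B qC \<gamma> C p = yh p - t *\<^sub>R D p - t\<^sup>2 *\<^sub>R Q p" .
              have "y p - yhat qA \<alpha> A' qB \<beta> B qC \<gamma> C p = r p + t *\<^sub>R D p + t\<^sup>2 *\<^sub>R Q p"
                unfolding yy r_def by (simp add: algebra_simps)
              then show "ennreal ((norm (y p - yhat qA \<alpha> A' qB \<beta> B qC \<gamma> C p))\<^sup>2) = ennreal ((norm (r p + t *\<^sub>R D p + t\<^sup>2 *\<^sub>R Q p))\<^sup>2)"
                by simp
            qed
          qed
          finally show "(\<integral>\<^sup>+p. ennreal ((norm (r p))\<^sup>2) \<partial>\<mu>) \<le> (\<integral>\<^sup>+p. ennreal ((norm (r p + t *\<^sub>R D p + t\<^sup>2 *\<^sub>R Q p))\<^sup>2) \<partial>\<mu>)"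
            using J0 by simp
        qed
      qed
      then show "(\<integral>p. inner (r p) (cscale (\<alpha> i p) (U p ** cmat (eunit a c) ** xh p)) \<partial>\<mu>) = 0"
        by (simp add: D_def F_def cscale_mm_left cscale_mm_right)
    qed
  qed
  show ?thesis using caseA caseB caseC by blast

qed

end
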